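(* Let $G=\{g_1,\dots,g_n\}$ be a finite group and let $S\subseteq G$ be a subset such that $gSg^{-1}=S$ for all $g\in G$, $S$ generates $G$, $S=S^{-1}$ and $1\notin S$. Put $r:=\#S$, and assume the Cayley graph $\mathscr{X}=\mathrm{Cay}(G,S)$ is not a cycle graph (i.e. $\chi(\mathscr{X})\neq 0$). Let $\ell$ be a prime and $\beta:S\to\mathbb{Z}_\ell$ a function such that: (1) $\beta(gag^{-1})=\beta(a)$ for all $g\in G$, $a\in S$; (2) the image of $\beta$ generates $\mathbb{Z}_\ell$ as a $\mathbb{Z}_\ell$-module; (3) $\beta(s^{-1})=-\beta(s)$ for all $s\in S$; (4) the image of $\beta$ lies in $\mathbb{Z}$; (5) there exist $m>0$ and $(h_1,\dots,h_m)\in S^m$ with $h_1\cdots h_m\in S$ and $\beta(h_1\cdots h_m)\not\equiv\sum_{i=1}^m\beta(h_i)\pmod{\ell}$. Let $f_{\mathscr{X},\alpha}(T)$ be the Iwasawa power series of the associated tower, namely the determinant of the $n\times n$ matrix whose $(i,j)$-entry is $r\,\delta_{ij}-\delta_S(g_ig_j^{-1})(1+T)^{\beta(g_ig_j^{-1})}$. Then \[f_{\mathscr{X},\alpha}(T)=\prod_{\chi\in\mathrm{Irr}(G)}P_\chi(T)^{\chi(1)^2}.\]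
   Context: The Cayley graph $\mathrm{Cay}(G,S)$ has vertex set $\{v_g: g\in G\}$, with an edge joining $v_{g_i}$ to $v_{g_j}$ whenever $g_ig_j^{-1}\in S$; the voltage assignment is $\alpha(e)=\beta(g_1g_2^{-1})$ for $e$ joining $v_{g_1}$ to $v_{g_2}$. Here $\delta_{ij}$ is the Kronecker delta, $\delta_S(g)=1$ if $g\in S$ and $0$ otherwise, and $(1+T)^b$ for $b\in\mathbb{Z}$ is viewed in $\mathbb{Z}_\ell[[T]]$. Fix an embedding $\bar{\mathbb{Q}}\hookrightarrow\bar{\mathbb{Q}}_\ell$ and a finite extension $\mathcal{K}$ of $\mathbb{Q}_\ell$ containing all $n$-th roots of unity, with valuation ring $\mathcal{O}$. $\mathrm{Irr}(G)$ is the set of irreducible characters $\chi:G\to\bar{\mathbb{Q}}_\ell$ (their values lie in $\mathcal{O}$). For $\chi\in\mathrm{Irr}(G)$, $Q_\chi(T):=r\chi(1)-\sum_{t\in S}(1+T)^{\beta(t)}\chi(t)$ and $P_\chi(T):=Q_\chi(T)/\chi(1)$. *)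

theory Defs
  imports "HOL-Algebra.Generated_Groups" "Jordan_Normal_Form.Determinant"
    "HOL-Computational_Algebra.Formal_Power_Series" "HOL-Number_Theory.Cong"
begin

(* trace of a square matrix *)
definition mat_trace :: "'b::comm_ring_1 mat \<Rightarrow> 'b" where
  "mat_trace A = (\<Sum>i<dim_row A. A $$ (i,i))"

(* complex linear representation of degree d of the group G *)
definition is_rep :: "('a,'m) monoid_scheme \<Rightarrow> nat \<Rightarrow> ('a \<Rightarrow> complex mat) \<Rightarrow> bool" where
  "is_rep G d \<rho> \<longleftrightarrow> 0 < d \<and>
     (\<forall>g\<in>carrier G. \<rho> g \<in> carrier_mat d d) \<and>
     \<rho> \<one>\<^bsub>G\<^esub> = 1\<^sub>m d \<and>
     (\<forall>g\<in>carrier G. \<forall>h\<in>carrier G. \<rho> (g \<otimes>\<^bsub>G\<^esub> h) = \<rho> g * \<rho> h)"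

(* linear subspace of C^d *)
definition is_subspace :: "nat \<Rightarrow> complex vec set \<Rightarrow> bool" where
  "is_subspace d W \<longleftrightarrow> W \<subseteq> carrier_vec d \<and> 0\<^sub>v d \<in> W \<and>
     (\<forall>v\<in>W. \<forall>w\<in>W. v + w \<in> W) \<and> (\<forall>c. \<forall>v\<in>W. c \<cdot>\<^sub>v v \<in> W)"

(* irreducible representation: no G-stable subspace other than 0 and C^d *)
definition is_irr_rep :: "('a,'m) monoid_scheme \<Rightarrow> nat \<Rightarrow> ('a \<Rightarrow> complex mat) \<Rightarrow> bool" where
  "is_irr_rep G d \<rho> \<longleftrightarrow> is_rep G d \<rho> \<and>
     (\<forall>W. is_subspace d W \<and> (\<forall>g\<in>carrier G. \<forall>w\<in>W. \<rho> g *\<^sub>v w \<in> W)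
        \<longrightarrow> W = {0\<^sub>v d} \<or> W = carrier_vec d)"

(* character of a representation, extended by 0 outside the carrier *)
definition character :: "('a,'m) monoid_scheme \<Rightarrow> ('a \<Rightarrow> complex mat) \<Rightarrow> 'a \<Rightarrow> complex" where
  "character G \<rho> = (\<lambda>g. if g \<in> carrier G then mat_trace (\<rho> g) else 0)"

(* Irr(G): the set of irreducible characters *)
definition Irr :: "('a,'m) monoid_scheme \<Rightarrow> ('a \<Rightarrow> complex) set" where
  "Irr G = {\<chi>. \<exists>d \<rho>. is_irr_rep G d \<rho> \<and> \<chi> = character G \<rho>}"

(* the degree chi(1), a positive integer, as a natural number *)
definition char_deg :: "('a,'m) monoid_scheme \<Rightarrow> ('a \<Rightarrow> complex) \<Rightarrow> nat" where
  "char_deg G \<chi> = nat \<lfloor>Re (\<chi> \<one>\<^bsub>G\<^esub>)\<rfloor>"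

(* (1+T)^b for b an integer, as the binomial power series *)
definition one_plus_T_pow :: "int \<Rightarrow> complex fps" where
  "one_plus_T_pow b = fps_binomial (of_int b)"

(* Euler characteristic #V - #E of the (simple, undirected) Cayley graph Cay(G,S) *)
definition cayley_euler_char :: "('a,'m) monoid_scheme \<Rightarrow> 'a set \<Rightarrow> int" where
  "cayley_euler_char G S = int (card (carrier G)) -
     int (card {{g, h} | g h. g \<in> carrier G \<and> h \<in> carrier G \<and> g \<otimes>\<^bsub>G\<^esub> inv\<^bsub>G\<^esub> h \<in> S})"

(* Q_chi(T) = r chi(1) - sum_{t in S} (1+T)^beta(t) chi(t) *)
definition Q_chi :: "('a,'m) monoid_scheme \<Rightarrow> 'a set \<Rightarrow> ('a \<Rightarrow> int) \<Rightarrow> ('a \<Rightarrow> complex) \<Rightarrow> complex fps" where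
  "Q_chi G S \<beta> \<chi> = fps_const (of_nat (card S) * \<chi> \<one>\<^bsub>G\<^esub>)
      - (\<Sum>t\<in>S. fps_const (\<chi> t) * one_plus_T_pow (\<beta> t))"

(* P_chi(T) = Q_chi(T) / chi(1) *)
definition P_chi :: "('a,'m) monoid_scheme \<Rightarrow> 'a set \<Rightarrow> ('a \<Rightarrow> int) \<Rightarrow> ('a \<Rightarrow> complex) \<Rightarrow> complex fps" where
  "P_chi G S \<beta> \<chi> = fps_const (1 / \<chi> \<one>\<^bsub>G\<^esub>) * Q_chi G S \<beta> \<chi>"

(* Iwasawa power series: det of (r delta_ij - delta_S(g_i g_j^-1)(1+T)^beta(g_i g_j^-1)) *)
definition iwasawa_fps :: "('a,'m) monoid_scheme \<Rightarrow> 'a set \<Rightarrow> ('a \<Rightarrow> int) \<Rightarrow> nat \<Rightarrow> (nat \<Rightarrow> 'a) \<Rightarrow> complex fps" where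
  "iwasawa_fps G S \<beta> n e = det (mat n n (\<lambda>(i,j).
      (if i = j then of_nat (card S) else 0) -
      (if e i \<otimes>\<^bsub>G\<^esub> inv\<^bsub>G\<^esub> e j \<in> S then one_plus_T_pow (\<beta> (e i \<otimes>\<^bsub>G\<^esub> inv\<^bsub>G\<^esub> e j)) else 0)))"

end

theory Submission
  imports Defs "Jordan_Normal_Form.Char_Poly"
begin

(* ---- part 1 ---- *)

interpretation fpsc: comm_ring_hom "fps_const :: complex \<Rightarrow> complex fps"
  by unfold_locales (simp_all add: fps_const_add fps_const_mult)

definition injm :: "'b::field mat \<Rightarrow> bool" where
  "injm B \<longleftrightarrow> (\<forall>c \<in> carrier_vec (dim_col B). B *\<^sub>v c = 0\<^sub>v (dim_row B) \<longrightarrow> c = 0\<^sub>v (dim_col B))"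

lemma mult_mat_vec_index: "A \<in> carrier_mat nr nc \<Longrightarrow> c \<in> carrier_vec nc \<Longrightarrow> i < nr \<Longrightarrow>
  (A *\<^sub>v c) $ i = (\<Sum>j<nc. A $$ (i,j) * c $ j)"
  by (auto simp: mult_mat_vec_def scalar_prod_def atLeast0LessThan)

lemma injm_le:
  fixes B :: "'b::field mat"
  assumes B: "B \<in> carrier_mat d k" and inj: "injm B"
  shows "k \<le> d"
proof (rule ccontr)
  assume "\<not> k \<le> d" hence kd: "d < k" by simp
  define B' where "B' = mat k k (\<lambda>(i,j). if i < d then B $$ (i,j) else 0)"
  have B'c: "B' \<in> carrier_mat k k" unfolding B'_def by simp
  have "transpose_mat B' *\<^sub>v unit_vec k (k-1) = 0\<^sub>v k"
    by (rule eq_vecI, insert kd, auto simp: B'_def mult_mat_vec_def scalar_prod_def unit_vec_def intro!: sum.neutral)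
  moreover have "unit_vec k (k-1) \<noteq> (0\<^sub>v k :: 'b vec)" using kd
    by (metis diff_less index_unit_vec(1) index_zero_vec(1) less_nat_zero_code not_gr_zero one_neq_zero zero_less_one)
  moreover have tc: "transpose_mat B' \<in> carrier_mat k k" using B'c by simp
  moreover have "unit_vec k (k-1) \<in> carrier_vec k" by simp
  ultimately have "det (transpose_mat B') = 0"
    by (subst det_0_iff_vec_prod_zero[OF tc]) blast
  hence "det B' = 0" using det_transpose[OF B'c] by simp
  then obtain v where v: "v \<in> carrier_vec k" "v \<noteq> 0\<^sub>v k" "B' *\<^sub>v v = 0\<^sub>v k"
    using det_0_iff_vec_prod_zero[OF B'c] by auto
  have "B *\<^sub>v v = 0\<^sub>v d"
  proof (rule eq_vecI)
    fix i assume i: "i < dim_vec (0\<^sub>v d :: 'b vec)"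
    hence id: "i < d" by simp
    have "(B *\<^sub>v v) $ i = (\<Sum>j<k. B $$ (i,j) * v $ j)" using mult_mat_vec_index[OF B v(1) id] .
    also have "\<dots> = (\<Sum>j<k. B' $$ (i,j) * v $ j)" by (intro sum.cong, insert kd id, auto simp: B'_def)
    also have "\<dots> = (B' *\<^sub>v v) $ i" using mult_mat_vec_index[OF B'c v(1)] id kd by simp
    also have "\<dots> = 0" using v(3) id kd by simp
    finally show "(B *\<^sub>v v) $ i = 0\<^sub>v d $ i" using id by simp
  qed (insert B, auto)
  with inj B v show False unfolding injm_def by auto
qed

lemma injm_square_det:
  fixes B :: "'b::field mat"
  assumes B: "B \<in> carrier_mat d d" and inj: "injm B"
  shows "det B \<noteq> 0"
  using det_0_iff_vec_prod_zero[OF B] inj B unfolding injm_def by auto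

lemma det_inverse_ex:
  fixes B :: "'b::field mat"
  assumes B: "B \<in> carrier_mat d d" and dB: "det B \<noteq> 0"
  shows "\<exists>V \<in> carrier_mat d d. B * V = 1\<^sub>m d \<and> V * B = 1\<^sub>m d"
  using det_non_zero_imp_unit[OF B dB, of "()"] 
  unfolding Units_def ring_mat_def by auto

definition appcol :: "'b::field mat \<Rightarrow> 'b vec \<Rightarrow> 'b mat" where
  "appcol B w = mat (dim_row B) (dim_col B + 1) (\<lambda>(i,j). if j < dim_col B then B $$ (i,j) else w $ i)"

lemma appcol_carrier: "B \<in> carrier_mat d k \<Longrightarrow> appcol B w \<in> carrier_mat d (k+1)"
  unfolding appcol_def by auto

lemma appcol_index: "B \<in> carrier_mat d k \<Longrightarrow> i < d \<Longrightarrow> j < k + 1 \<Longrightarrow>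
   appcol B w $$ (i,j) = (if j < k then B $$ (i,j) else w $ i)"
  unfolding appcol_def by auto

lemma injm_appcol:
  fixes B :: "'b::field mat"
  assumes B: "B \<in> carrier_mat d k" and inj: "injm B" and w: "w \<in> carrier_vec d"
    and nw: "\<forall>c\<in>carrier_vec k. B *\<^sub>v c \<noteq> w"
  shows "injm (appcol B w)"
  unfolding injm_def
proof (intro ballI impI)
  have A: "appcol B w \<in> carrier_mat d (k+1)" by (rule appcol_carrier[OF B])
  fix c assume c: "c \<in> carrier_vec (dim_col (appcol B w))"
    and z: "appcol B w *\<^sub>v c = 0\<^sub>v (dim_row (appcol B w))"
  from c A have c: "c \<in> carrier_vec (k+1)" by simp
  from z A have z: "appcol B w *\<^sub>v c = 0\<^sub>v d" by simp
  define c' where "c' = vec k (\<lambda>i. c $ i)"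
  define t where "t = c $ k"
  have c'c: "c' \<in> carrier_vec k" unfolding c'_def by simp
  have eq: "(\<Sum>j<k. B $$ (i,j) * c $ j) + t * w $ i = 0" if i: "i < d" for i
  proof -
    have "0 = (appcol B w *\<^sub>v c) $ i" using z i by simp
    also have "\<dots> = (\<Sum>j<k+1. appcol B w $$ (i,j) * c $ j)" by (rule mult_mat_vec_index[OF A c i])
    also have "\<dots> = (\<Sum>j<k. B $$ (i,j) * c $ j) + t * w $ i"
      using i by (simp add: appcol_index[OF B] t_def)
    finally show ?thesis by simp
  qed
  have t0: "t = 0"
  proof (rule ccontr)
    assume t: "t \<noteq> 0"
    define c'' where "c'' = vec k (\<lambda>j. - c $ j / t)"
    have "B *\<^sub>v c'' = w"
    proof (rule eq_vecI)
      fix i assume "i < dim_vec w"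
      hence i: "i < d" using w by simp
      have "(B *\<^sub>v c'') $ i = (\<Sum>j<k. B $$ (i,j) * (- c $ j / t))"
        using mult_mat_vec_index[OF B _ i, of c''] by (simp add: c''_def)
      also have "\<dots> = - (\<Sum>j<k. B $$ (i,j) * c $ j) / t"
        by (simp add: sum_divide_distrib sum_negf)
      also have "\<dots> = w $ i"
      proof -
        from eq[OF i] have "(\<Sum>j<k. B $$ (i,j) * c $ j) = - (t * w $ i)" by (simp add: eq_neg_iff_add_eq_0)
        thus ?thesis using t by simp
      qed
      finally show "(B *\<^sub>v c'') $ i = w $ i" .
    qed (insert B w, auto)
    moreover have "c'' \<in> carrier_vec k" unfolding c''_def by simp
    ultimately show False using nw by auto
  qed
  have "B *\<^sub>v c' = 0\<^sub>v d"
  proof (rule eq_vecI)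
    fix i assume "i < dim_vec (0\<^sub>v d :: 'b vec)"
    hence i: "i < d" by simp
    have "(B *\<^sub>v c') $ i = (\<Sum>j<k. B $$ (i,j) * c $ j)"
      using mult_mat_vec_index[OF B c'c i] by (simp add: c'_def)
    also have "\<dots> = 0" using eq[OF i] t0 by simp
    finally show "(B *\<^sub>v c') $ i = 0\<^sub>v d $ i" using i by simp
  qed (insert B, auto)
  hence "c' = 0\<^sub>v k" using inj B c'c unfolding injm_def by auto
  hence cj: "c $ j = 0" if "j < k" for j using that unfolding c'_def
    by (metis index_vec index_zero_vec(1))
  show "c = 0\<^sub>v (dim_col (appcol B w))"
  proof (rule eq_vecI)
    fix i assume "i < dim_vec (0\<^sub>v (dim_col (appcol B w)) :: 'b vec)"
    hence "i < k + 1" using A by simp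
    thus "c $ i = 0\<^sub>v (dim_col (appcol B w)) $ i" using cj t0 A unfolding t_def
      by (cases "i < k") (auto simp: less_Suc_eq)
  qed (insert c A, auto)
qed

lemma sum_if_less: "k \<le> (d::nat) \<Longrightarrow> (\<Sum>l<d. if l < k then f l else 0) = (\<Sum>l<k. f l)"
proof -
  assume kd: "k \<le> d"
  have "(\<Sum>l<d. if l < k then f l else 0) = (\<Sum>l\<in>{..<d} \<inter> {l. l < k}. f l)"
    using sum.inter_restrict[of "{..<d}" f "{l. l<k}"] by simp
  also have "{..<d} \<inter> {l. l < k} = {..<k}" using kd by auto
  finally show ?thesis .
qed

lemma not_surj:
  fixes B :: "'b::field mat"
  assumes B: "B \<in> carrier_mat d k" and kd: "k < d"
  shows "\<exists>j<d. \<forall>c\<in>carrier_vec k. B *\<^sub>v c \<noteq> unit_vec d j"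
proof (rule ccontr)
  assume "\<not> ?thesis"
  hence "\<forall>j. \<exists>c. j < d \<longrightarrow> c \<in> carrier_vec k \<and> B *\<^sub>v c = unit_vec d j" by auto
  then obtain cf where cf: "\<And>j. j < d \<Longrightarrow> cf j \<in> carrier_vec k \<and> B *\<^sub>v cf j = unit_vec d j"
    by metis
  define B2 where "B2 = mat d d (\<lambda>(i,j). if j < k then B $$ (i,j) else 0)"
  define C2 where "C2 = mat d d (\<lambda>(i,j). if i < k then cf j $ i else 0)"
  have B2c: "B2 \<in> carrier_mat d d" and C2c: "C2 \<in> carrier_mat d d" unfolding B2_def C2_def by auto
  have "B2 * C2 = 1\<^sub>m d"
  proof (rule eq_matI)
    fix i j assume "i < dim_row (1\<^sub>m d :: 'b mat)" "j < dim_col (1\<^sub>m d :: 'b mat)"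
    hence i: "i < d" and j: "j < d" by auto
    have "(B2 * C2) $$ (i,j) = (\<Sum>l<d. B2 $$ (i,l) * C2 $$ (l,j))"
      using i j B2c C2c by (simp add: times_mat_def scalar_prod_def atLeast0LessThan row_def col_def)
    also have "\<dots> = (\<Sum>l<d. if l < k then B $$ (i,l) * cf j $ l else 0)"
      by (intro sum.cong, insert i j, auto simp: B2_def C2_def)
    also have "\<dots> = (\<Sum>l<k. B $$ (i,l) * cf j $ l)" using sum_if_less[of k d] kd by simp
    also have "\<dots> = (B *\<^sub>v cf j) $ i" using mult_mat_vec_index[OF B _ i, of "cf j"] cf[OF j] by simp
    also have "\<dots> = 1\<^sub>m d $$ (i,j)" using cf[OF j] i j by simp
    finally show "(B2 * C2) $$ (i,j) = 1\<^sub>m d $$ (i,j)" .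
  qed (insert B2c C2c, auto)
  hence "det B2 * det C2 = 1" using det_mult[OF B2c C2c] by simp
  moreover have "det B2 = 0"
  proof -
    have "B2 *\<^sub>v unit_vec d (d-1) = 0\<^sub>v d"
      by (rule eq_vecI, insert kd, auto simp: B2_def mult_mat_vec_def scalar_prod_def unit_vec_def intro!: sum.neutral)
    moreover have "unit_vec d (d-1) \<noteq> (0\<^sub>v d :: 'b vec)" using kd
      by (metis diff_less index_unit_vec(1) index_zero_vec(1) less_nat_zero_code not_gr_zero one_neq_zero zero_less_one)
    moreover have "unit_vec d (d-1) \<in> carrier_vec d" by simp
    ultimately show ?thesis by (subst det_0_iff_vec_prod_zero[OF B2c]) blast
  qed
  ultimately show False by simp
qed

lemma extend_basis:
  fixes B :: "'b::field mat"
  assumes B: "B \<in> carrier_mat d k" and inj: "injm B"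
  shows "\<exists>U\<in>carrier_mat d d. det U \<noteq> 0 \<and> (\<forall>i<d. \<forall>j<k. U $$ (i,j) = B $$ (i,j))"
  using B inj
proof (induct "d - k" arbitrary: k B rule: less_induct)
  case less
  have kd: "k \<le> d" using injm_le less by blast
  show ?case
  proof (cases "k = d")
    case True
    thus ?thesis using injm_square_det less by auto
  next
    case False
    hence kd: "k < d" using kd by simp
    from not_surj[OF less(2) kd] obtain j where j: "j < d"
      and nj: "\<forall>c\<in>carrier_vec k. B *\<^sub>v c \<noteq> unit_vec d j" by auto
    let ?B = "appcol B (unit_vec d j)"
    have Bc: "?B \<in> carrier_mat d (k+1)" by (rule appcol_carrier[OF less(2)])
    have injB: "injm ?B" by (rule injm_appcol[OF less(2) less(3) _ nj]) simp
    have lt: "d - (k+1) < d - k" using kd by simp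
    from less(1)[OF lt Bc injB] obtain U where U: "U \<in> carrier_mat d d" "det U \<noteq> 0"
      "\<forall>i<d. \<forall>j<k+1. U $$ (i,j) = ?B $$ (i,j)" by auto
    thus ?thesis using appcol_index[OF less(2)] by (intro bexI[of _ U]) auto
  qed
qed

lemma lincomb_in_subspace:
  assumes W: "is_subspace d W" and B: "B \<in> carrier_mat d k"
    and cols: "\<forall>j<k. col B j \<in> W" and c: "c \<in> carrier_vec k"
  shows "B *\<^sub>v c \<in> W"
proof -
  have "m \<le> k \<Longrightarrow> vec d (\<lambda>i. \<Sum>j<m. B $$ (i,j) * c $ j) \<in> W" for m
  proof (induct m)
    case 0
    have "vec d (\<lambda>i. \<Sum>j<0. B $$ (i,j) * c $ j) = 0\<^sub>v d" by (rule eq_vecI) auto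
    thus ?case using W unfolding is_subspace_def by simp
  next
    case (Suc m)
    have "vec d (\<lambda>i. \<Sum>j<Suc m. B $$ (i,j) * c $ j) =
       vec d (\<lambda>i. \<Sum>j<m. B $$ (i,j) * c $ j) + (c $ m) \<cdot>\<^sub>v col B m"
      by (rule eq_vecI, insert B Suc(2), auto simp: col_def mult.commute)
    moreover have "(c $ m) \<cdot>\<^sub>v col B m \<in> W" using W cols Suc(2) unfolding is_subspace_def by auto
    ultimately show ?case using Suc W unfolding is_subspace_def by auto
  qed
  from this[of k] have "vec d (\<lambda>i. \<Sum>j<k. B $$ (i,j) * c $ j) \<in> W" by simp
  moreover have "vec d (\<lambda>i. \<Sum>j<k. B $$ (i,j) * c $ j) = B *\<^sub>v c"
    by (rule eq_vecI, insert B c, auto simp: scalar_prod_def row_def atLeast0LessThan)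
  ultimately show ?thesis by simp
qed

lemma subspace_basis:
  fixes W :: "complex vec set"
  assumes W: "is_subspace d W"
  shows "\<exists>k B. B \<in> carrier_mat d k \<and> injm B \<and> W = {B *\<^sub>v c | c. c \<in> carrier_vec k}"
proof -
  define P where "P k \<longleftrightarrow> (\<exists>B\<in>carrier_mat d k. injm B \<and> (\<forall>j<k. col B j \<in> W))" for k
  have P0: "P 0" unfolding P_def
    by (rule bexI[of _ "0\<^sub>m d 0"], auto simp: injm_def)
  have bound: "\<forall>y. P y \<longrightarrow> y \<le> d" unfolding P_def using injm_le by blast
  obtain k where Pk: "P k" and kmax: "\<forall>y. P y \<longrightarrow> y \<le> k"
    using ex_has_greatest_nat[of P 0 "\<lambda>x. x" "d+1"] P0 bound by force
  from Pk obtain B where B: "B \<in> carrier_mat d k" and inj: "injm B" and cols: "\<forall>j<k. col B j \<in> W"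
    unfolding P_def by auto
  have sub: "{B *\<^sub>v c | c. c \<in> carrier_vec k} \<subseteq> W"
    using lincomb_in_subspace[OF W B cols] by auto
  have sup: "W \<subseteq> {B *\<^sub>v c | c. c \<in> carrier_vec k}"
  proof
    fix w assume w: "w \<in> W"
    show "w \<in> {B *\<^sub>v c | c. c \<in> carrier_vec k}"
    proof (rule ccontr)
      assume "w \<notin> {B *\<^sub>v c | c. c \<in> carrier_vec k}"
      hence nw: "\<forall>c\<in>carrier_vec k. B *\<^sub>v c \<noteq> w" by auto
      have wc: "w \<in> carrier_vec d" using w W unfolding is_subspace_def by auto
      have "P (k+1)" unfolding P_def
      proof (intro bexI conjI allI impI)
        show "injm (appcol B w)" by (rule injm_appcol[OF B inj wc nw])
        fix j assume j: "j < k + 1"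
        have "col (appcol B w) j = (if j < k then col B j else w)"
          by (rule eq_vecI, insert B wc j, auto simp: appcol_def col_def)
        thus "col (appcol B w) j \<in> W" using cols w j by auto
      qed (rule appcol_carrier[OF B])
      with kmax show False by auto
    qed
  qed
  from sub sup B inj show ?thesis by blast
qed


(* ---- part 2 ---- *)

lemma mat_vec_unit: fixes A :: "'b::comm_ring_1 mat" shows "A \<in> carrier_mat m n \<Longrightarrow> j < n \<Longrightarrow> A *\<^sub>v unit_vec n j = col A j"
proof (rule eq_vecI)
  fix i assume A: "A \<in> carrier_mat m n" and j: "j < n" and "i < dim_vec (col A j)"
  hence i: "i < m" by simp
  thus "(A *\<^sub>v unit_vec n j) $ i = col A j $ i" using A i j by (simp add: carrier_matD)
qed simp

lemma four_block_inj:
  assumes "four_block_mat A1 B1 C1 D1 = four_block_mat A2 B2 C2 D2"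
    and "A1 \<in> carrier_mat n1 m1" "A2 \<in> carrier_mat n1 m1"
    and "D1 \<in> carrier_mat n2 m2" "D2 \<in> carrier_mat n2 m2"
  shows "A1 = A2 \<and> D1 = D2"
proof -
  have dims: "dim_row A1 = n1" "dim_col A1 = m1" "dim_row A2 = n1" "dim_col A2 = m1"
    "dim_row D1 = n2" "dim_col D1 = m2" "dim_row D2 = n2" "dim_col D2 = m2" using assms by auto
  show ?thesis
  proof
  show "A1 = A2"
  proof (rule eq_matI)
    fix i j assume "i < dim_row A2" "j < dim_col A2"
    hence i: "i < n1" and j: "j < m1" using assms by auto
    have "A1 $$ (i,j) = four_block_mat A1 B1 C1 D1 $$ (i,j)" using i j dims by simp
    also have "\<dots> = four_block_mat A2 B2 C2 D2 $$ (i,j)" using assms(1) by simp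
    also have "\<dots> = A2 $$ (i,j)" using i j dims by simp
    finally show "A1 $$ (i,j) = A2 $$ (i,j)" .
  qed (insert assms, auto)
  show "D1 = D2"
  proof (rule eq_matI)
    fix i j assume "i < dim_row D2" "j < dim_col D2"
    hence i: "i < n2" and j: "j < m2" using assms by auto
    have "D1 $$ (i,j) = four_block_mat A1 B1 C1 D1 $$ (i+n1,j+m1)" using i j dims by simp
    also have "\<dots> = four_block_mat A2 B2 C2 D2 $$ (i+n1,j+m1)" using assms(1) by simp
    also have "\<dots> = D2 $$ (i,j)" using i j dims by simp
    finally show "D1 $$ (i,j) = D2 $$ (i,j)" .
  qed (insert assms, auto)
  qed
qed

lemma conj_mult:
  fixes U :: "'b :: comm_ring_1 mat"
  assumes U: "U \<in> carrier_mat d d" and V: "V \<in> carrier_mat d d" and UV: "U * V = 1\<^sub>m d"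
    and P: "P \<in> carrier_mat d d" and Q: "Q \<in> carrier_mat d d"
  shows "(V * P * U) * (V * Q * U) = V * (P * Q) * U"
proof -
  have "(V * P * U) * (V * Q * U) = V * P * (U * (V * Q * U))"
    using U V P Q by (simp add: assoc_mult_mat[of _ d d _ d _ d])
  also have "U * (V * Q * U) = (U * V) * Q * U"
    using U V P Q by (simp add: assoc_mult_mat[of _ d d _ d _ d])
  also have "\<dots> = Q * U" using UV by (simp add: left_mult_one_mat[OF Q])
  also have "V * P * (Q * U) = V * (P * Q) * U"
    using U V P Q by (simp add: assoc_mult_mat[of _ d d _ d _ d])
  finally show ?thesis .
qed

context group begin

lemma rep_carrier: "is_rep G d \<rho> \<Longrightarrow> g \<in> carrier G \<Longrightarrow> \<rho> g \<in> carrier_mat d d"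
  unfolding is_rep_def by auto

lemma rep_mult: "is_rep G d \<rho> \<Longrightarrow> g \<in> carrier G \<Longrightarrow> h \<in> carrier G \<Longrightarrow> \<rho> (g \<otimes> h) = \<rho> g * \<rho> h"
  unfolding is_rep_def by auto

lemma rep_one: "is_rep G d \<rho> \<Longrightarrow> \<rho> \<one> = 1\<^sub>m d"
  unfolding is_rep_def by auto

lemma rep_inv: "is_rep G d \<rho> \<Longrightarrow> g \<in> carrier G \<Longrightarrow> \<rho> g * \<rho> (inv g) = 1\<^sub>m d"
  using rep_mult[of d \<rho> g "inv g"] rep_one[of d \<rho>] by simp

lemma rep_inv': "is_rep G d \<rho> \<Longrightarrow> g \<in> carrier G \<Longrightarrow> \<rho> (inv g) * \<rho> g = 1\<^sub>m d"
  using rep_mult[of d \<rho> "inv g" g] rep_one[of d \<rho>] by simp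

lemma reducible_split:
  assumes rep: "is_rep G d \<rho>" and nirr: "\<not> is_irr_rep G d \<rho>"
  shows "\<exists>k U V A X D. 0 < k \<and> k < d \<and> U \<in> carrier_mat d d \<and> V \<in> carrier_mat d d \<and>
     U * V = 1\<^sub>m d \<and> V * U = 1\<^sub>m d \<and> is_rep G k A \<and> is_rep G (d-k) D \<and>
     (\<forall>g\<in>carrier G. X g \<in> carrier_mat k (d-k) \<and>
        V * \<rho> g * U = four_block_mat (A g) (X g) (0\<^sub>m (d-k) k) (D g))"
proof -
  from nirr rep obtain W where W: "is_subspace d W" and inv: "\<forall>g\<in>carrier G. \<forall>w\<in>W. \<rho> g *\<^sub>v w \<in> W"
    and W0: "W \<noteq> {0\<^sub>v d}" and Wd: "W \<noteq> carrier_vec d"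
    unfolding is_irr_rep_def by auto
  from subspace_basis[OF W] obtain k B where B: "B \<in> carrier_mat d k" and inj: "injm B"
    and WB: "W = {B *\<^sub>v c | c. c \<in> carrier_vec k}" by auto
  have k0: "0 < k"
  proof (rule ccontr)
    assume "\<not> 0 < k" hence k: "k = 0" by simp
    have "W \<subseteq> {0\<^sub>v d}"
    proof
      fix x assume "x \<in> W"
      then obtain c where c: "c \<in> carrier_vec k" and x: "x = B *\<^sub>v c" unfolding WB by auto
      have "B *\<^sub>v c = 0\<^sub>v d"
      proof (rule eq_vecI)
        fix i assume "i < dim_vec (0\<^sub>v d :: complex vec)"
        hence i: "i < d" by simp
        show "(B *\<^sub>v c) $ i = 0\<^sub>v d $ i" unfolding mult_mat_vec_index[OF B c i] using k i by simp
      qed (use B in simp)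
      thus "x \<in> {0\<^sub>v d}" using x by simp
    qed
    moreover have "0\<^sub>v d \<in> W" using W unfolding is_subspace_def by simp
    ultimately have "W = {0\<^sub>v d}" by auto
    with W0 show False by simp
  qed
  have kd: "k < d"
  proof (rule ccontr)
    assume "\<not> k < d" hence kd: "k = d" using injm_le[OF B inj] by simp
    with B have Bd: "B \<in> carrier_mat d d" by simp
    from det_inverse_ex[OF Bd injm_square_det[OF Bd inj]] obtain Vb where
      Vb: "Vb \<in> carrier_mat d d" "B * Vb = 1\<^sub>m d" by auto
    have "carrier_vec d \<subseteq> W"
    proof
      fix w :: "complex vec" assume w: "w \<in> carrier_vec d"
      have "B *\<^sub>v (Vb *\<^sub>v w) = (B * Vb) *\<^sub>v w" using assoc_mult_mat_vec[OF Bd Vb(1) w] by simp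
      also have "\<dots> = w" using Vb w by simp
      finally show "w \<in> W" unfolding WB using Vb w kd by (metis (mono_tags, lifting) mem_Collect_eq mult_mat_vec_carrier)
    qed
    with W Wd show False unfolding is_subspace_def by auto
  qed
  from extend_basis[OF B inj] obtain U where U: "U \<in> carrier_mat d d" and dU: "det U \<noteq> 0"
    and UB: "\<forall>i<d. \<forall>j<k. U $$ (i,j) = B $$ (i,j)" by auto
  from det_inverse_ex[OF U dU] obtain V where V: "V \<in> carrier_mat d d" and UV: "U * V = 1\<^sub>m d"
    and VU: "V * U = 1\<^sub>m d" by auto
  define N where "N g = V * \<rho> g * U" for g
  have Nc: "g \<in> carrier G \<Longrightarrow> N g \<in> carrier_mat d d" for g
    unfolding N_def using U V rep_carrier[OF rep] by auto
  have Nzero: "N g $$ (i,j) = 0" if g: "g \<in> carrier G" and i: "i < d" "k \<le> i" and j: "j < k" for g i j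
  proof -
    have rhoc: "\<rho> g \<in> carrier_mat d d" by (rule rep_carrier[OF rep g])
    have jd: "j < d" using j kd by simp
    have colU: "col U j = col B j" using U B UB j jd by (auto intro!: eq_vecI)
    have "col B j = B *\<^sub>v unit_vec k j" using mat_vec_unit[OF B j] by simp
    hence "col B j \<in> W" unfolding WB by auto
    hence "\<rho> g *\<^sub>v col B j \<in> W" using inv g by auto
    then obtain c where c: "c \<in> carrier_vec k" and rc: "\<rho> g *\<^sub>v col B j = B *\<^sub>v c" unfolding WB by auto
    define p where "p = vec d (\<lambda>i. if i < k then c $ i else 0)"
    have pc: "p \<in> carrier_vec d" unfolding p_def by simp
    have Up: "U *\<^sub>v p = B *\<^sub>v c"
    proof (rule eq_vecI)
      fix i assume "i < dim_vec (B *\<^sub>v c)" hence i: "i < d" using B by simp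
      have "(U *\<^sub>v p) $ i = (\<Sum>l<d. U $$ (i,l) * p $ l)" by (rule mult_mat_vec_index[OF U pc i])
      also have "\<dots> = (\<Sum>l<d. if l < k then B $$ (i,l) * c $ l else 0)"
        by (intro sum.cong, insert UB i, auto simp: p_def)
      also have "\<dots> = (\<Sum>l<k. B $$ (i,l) * c $ l)" using sum_if_less[of k d] kd by simp
      also have "\<dots> = (B *\<^sub>v c) $ i" using mult_mat_vec_index[OF B c i] by simp
      finally show "(U *\<^sub>v p) $ i = (B *\<^sub>v c) $ i" .
    qed (insert U B, auto)
    have "N g *\<^sub>v unit_vec d j = V *\<^sub>v (\<rho> g *\<^sub>v (U *\<^sub>v unit_vec d j))"
      unfolding N_def using U V rhoc by (simp add: assoc_mult_mat_vec[of _ d d _ d])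
    also have "U *\<^sub>v unit_vec d j = col B j" using mat_vec_unit[OF U jd] colU by simp
    also have "\<rho> g *\<^sub>v col B j = U *\<^sub>v p" using rc Up by simp
    also have "V *\<^sub>v (U *\<^sub>v p) = p" using V U VU pc by (simp add: assoc_mult_mat_vec[symmetric, of _ d d _ d])
    finally have "N g *\<^sub>v unit_vec d j = p" .
    hence "col (N g) j = p" using mat_vec_unit[OF Nc[OF g] jd] by simp
    moreover have "N g $$ (i,j) = col (N g) j $ i" using Nc[OF g] i jd by simp
    ultimately have "N g $$ (i,j) = p $ i" by simp
    thus ?thesis using i unfolding p_def by simp
  qed
  define A where "A g = mat k k (\<lambda>(i,j). N g $$ (i,j))" for g
  define X where "X g = mat k (d-k) (\<lambda>(i,j). N g $$ (i,j+k))" for g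
  define D where "D g = mat (d-k) (d-k) (\<lambda>(i,j). N g $$ (i+k,j+k))" for g
  have Ac: "A g \<in> carrier_mat k k" and Xc: "X g \<in> carrier_mat k (d-k)" and Dc: "D g \<in> carrier_mat (d-k) (d-k)" for g
    unfolding A_def X_def D_def by auto
  have dimsAD[simp]: "dim_row (A g) = k" "dim_col (A g) = k" "dim_row (D g) = d-k" "dim_col (D g) = d-k"
     "dim_row (X g) = k" "dim_col (X g) = d-k" for g
    unfolding A_def X_def D_def by auto
  have Nblock: "N g = four_block_mat (A g) (X g) (0\<^sub>m (d-k) k) (D g)" if g: "g \<in> carrier G" for g
  proof (rule eq_matI)
    fix i j assume "i < dim_row (four_block_mat (A g) (X g) (0\<^sub>m (d-k) k) (D g))"
      "j < dim_col (four_block_mat (A g) (X g) (0\<^sub>m (d-k) k) (D g))"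
    hence i: "i < d" and j: "j < d" using kd Ac Dc by auto
    show "N g $$ (i,j) = four_block_mat (A g) (X g) (0\<^sub>m (d-k) k) (D g) $$ (i,j)"
      using i j kd Ac Dc Xc Nzero[OF g i(1), of j] by (auto simp: A_def X_def D_def)
  qed (insert Nc[OF that] kd Ac Dc, auto)
  have Nmult: "N (g \<otimes> h) = N g * N h" if g: "g \<in> carrier G" and h: "h \<in> carrier G" for g h
    unfolding N_def rep_mult[OF rep g h]
    by (rule conj_mult[OF U V UV rep_carrier[OF rep g] rep_carrier[OF rep h], symmetric])
  have N1: "N \<one> = four_block_mat (1\<^sub>m k) (0\<^sub>m k (d-k)) (0\<^sub>m (d-k) k) (1\<^sub>m (d-k))"
  proof -
    have "N \<one> = 1\<^sub>m d" unfolding N_def rep_one[OF rep] using U V VU by simp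
    thus ?thesis using kd by simp
  qed
  have blocks: "A (g \<otimes> h) = A g * A h \<and> D (g \<otimes> h) = D g * D h"
    if g: "g \<in> carrier G" and h: "h \<in> carrier G" for g h
  proof -
    have "four_block_mat (A (g \<otimes> h)) (X (g \<otimes> h)) (0\<^sub>m (d-k) k) (D (g \<otimes> h)) =
      four_block_mat (A g) (X g) (0\<^sub>m (d-k) k) (D g) * four_block_mat (A h) (X h) (0\<^sub>m (d-k) k) (D h)"
      using Nmult[OF g h] Nblock[OF g] Nblock[OF h] Nblock[OF m_closed[OF g h]] by simp
    also have "\<dots> = four_block_mat (A g * A h + X g * 0\<^sub>m (d-k) k) (A g * X h + X g * D h)
         (0\<^sub>m (d-k) k * A h + D g * 0\<^sub>m (d-k) k) (0\<^sub>m (d-k) k * X h + D g * D h)"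
      by (rule mult_four_block_mat[OF Ac Xc _ Dc Ac Xc _ Dc]) auto
    also have "\<dots> = four_block_mat (A g * A h) (A g * X h + X g * D h)
         (0\<^sub>m (d-k) k) (D g * D h)"
    proof -
      have "A g * A h \<in> carrier_mat k k" "D g * D h \<in> carrier_mat (d-k) (d-k)"
        by (rule mult_carrier_mat[OF Ac Ac], rule mult_carrier_mat[OF Dc Dc])
      thus ?thesis using Ac Xc Dc by simp
    qed
    finally show ?thesis by (rule four_block_inj, insert Ac Dc, auto)
  qed
  have "four_block_mat (A \<one>) (X \<one>) (0\<^sub>m (d-k) k) (D \<one>) =
     four_block_mat (1\<^sub>m k) (0\<^sub>m k (d-k)) (0\<^sub>m (d-k) k) (1\<^sub>m (d-k))"
    using Nblock[OF one_closed] N1 by metis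
  from four_block_inj[OF this Ac _ Dc] have A1D1: "A \<one> = 1\<^sub>m k \<and> D \<one> = 1\<^sub>m (d-k)" by simp
  have repA: "is_rep G k A" unfolding is_rep_def using k0 Ac blocks A1D1 by auto
  have repD: "is_rep G (d-k) D" unfolding is_rep_def using kd Dc blocks A1D1 by auto
  show ?thesis
    by (rule exI[of _ k], rule exI[of _ U], rule exI[of _ V], rule exI[of _ A], rule exI[of _ X], rule exI[of _ D])
      (insert k0 kd U V UV VU repA repD Xc Nblock, auto simp: N_def)
qed

end

(* ---- part 3 ---- *)

lemma mult_index:
  fixes A :: "'b::comm_ring_1 mat"
  assumes "A \<in> carrier_mat nr n" "B \<in> carrier_mat n nc" "i < nr" "j < nc"
  shows "(A * B) $$ (i,j) = (\<Sum>l<n. A $$ (i,l) * B $$ (l,j))"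
  using assms by (simp add: scalar_prod_def atLeast0LessThan)

lemma trace_comm:
  fixes A :: "'b::comm_ring_1 mat"
  assumes A: "A \<in> carrier_mat m n" and B: "B \<in> carrier_mat n m"
  shows "mat_trace (A * B) = mat_trace (B * A)"
proof -
  have "mat_trace (A * B) = (\<Sum>i<m. (A * B) $$ (i,i))" unfolding mat_trace_def using A by simp
  also have "\<dots> = (\<Sum>i<m. \<Sum>l<n. A $$ (i,l) * B $$ (l,i))"
    by (rule sum.cong[OF refl], rule mult_index[OF A B]) auto
  also have "\<dots> = (\<Sum>l<n. \<Sum>i<m. B $$ (l,i) * A $$ (i,l))"
    by (subst sum.swap) (simp add: mult.commute)
  also have "\<dots> = (\<Sum>i<n. (B * A) $$ (i,i))"
    by (rule sum.cong[OF refl], rule mult_index[OF B A, symmetric]) auto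
  also have "\<dots> = mat_trace (B * A)" unfolding mat_trace_def using B by simp
  finally show ?thesis .
qed

lemma trace_conj:
  fixes P :: "'b::comm_ring_1 mat"
  assumes U: "U \<in> carrier_mat d d" and V: "V \<in> carrier_mat d d" and UV: "U * V = 1\<^sub>m d"
    and P: "P \<in> carrier_mat d d"
  shows "mat_trace (V * P * U) = mat_trace P"
proof -
  have "mat_trace (V * P * U) = mat_trace (U * (V * P))"
    by (rule trace_comm) (use U V P in auto)
  also have "U * (V * P) = (U * V) * P" using U V P by (simp add: assoc_mult_mat[of _ d d _ d _ d])
  also have "\<dots> = P" using UV P by simp
  finally show ?thesis .
qed

lemma sum_split_add: "(\<Sum>i<k+m. f i) = (\<Sum>i<k. f i) + (\<Sum>i<m. f (i+(k::nat)))"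
  by (induct m) (auto simp: add.commute add.left_commute)

lemma trace_four_block:
  fixes A :: "'b::comm_ring_1 mat"
  assumes A: "A \<in> carrier_mat k k" and D: "D \<in> carrier_mat m m"
  shows "mat_trace (four_block_mat A X Y D) = mat_trace A + mat_trace D"
proof -
  have dA: "dim_row A = k" "dim_col A = k" and dD: "dim_row D = m" "dim_col D = m" using A D by auto
  have "mat_trace (four_block_mat A X Y D) = (\<Sum>i<k+m. four_block_mat A X Y D $$ (i,i))"
    unfolding mat_trace_def using dA dD by simp
  also have "\<dots> = (\<Sum>i<k. A $$ (i,i)) + (\<Sum>i<m. D $$ (i,i))"
    unfolding sum_split_add using dA dD by simp
  finally show ?thesis unfolding mat_trace_def using dA dD by simp
qed

lemma trace_smult_one: "mat_trace (c \<cdot>\<^sub>m 1\<^sub>m d) = of_nat d * (c :: 'b::comm_ring_1)"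
  unfolding mat_trace_def by simp

lemma nonzero_mat_col:
  fixes B :: "'b::comm_ring_1 mat"
  assumes B: "B \<in> carrier_mat m n" and nz: "B \<noteq> 0\<^sub>m m n"
  shows "\<exists>j<n. col B j \<noteq> 0\<^sub>v m"
proof (rule ccontr)
  assume "\<not> ?thesis"
  hence z: "\<And>j. j < n \<Longrightarrow> col B j = 0\<^sub>v m" by auto
  have "B = 0\<^sub>m m n"
  proof (rule eq_matI)
    fix i j assume "i < dim_row (0\<^sub>m m n :: 'b mat)" "j < dim_col (0\<^sub>m m n :: 'b mat)"
    hence i: "i < m" and j: "j < n" by auto
    have "B $$ (i,j) = col B j $ i" using B i j by simp
    thus "B $$ (i,j) = 0\<^sub>m m n $$ (i,j)" using z[OF j] i j by simp
  qed (use B in auto)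
  with nz show False by simp
qed

lemma eigen_exists:
  fixes A :: "complex mat"
  assumes A: "A \<in> carrier_mat d d" and d: "0 < d"
  shows "\<exists>c v. v \<in> carrier_vec d \<and> v \<noteq> 0\<^sub>v d \<and> A *\<^sub>v v = c \<cdot>\<^sub>v v"
proof -
  from char_poly_factorized[OF A] obtain as where cA: "char_poly A = (\<Prod>a\<leftarrow>as. [:- a, 1:])"
    and len: "length as = d" by auto
  from len d obtain c where c: "c \<in> set as" by (cases as) auto
  have "poly (char_poly A) c = 0" unfolding cA by (rule linear_poly_root[OF c])
  hence "eigenvalue A c" using eigenvalue_root_char_poly[OF A] by simp
  then obtain v where "eigenvector A v c" unfolding eigenvalue_def by auto
  thus ?thesis unfolding eigenvector_def using A by auto
qed

context group begin

lemma schur1: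
  assumes irr: "is_irr_rep G d \<rho>" and A: "A \<in> carrier_mat d d"
    and comm: "\<forall>g\<in>carrier G. A * \<rho> g = \<rho> g * A"
  shows "\<exists>c. A = c \<cdot>\<^sub>m 1\<^sub>m d"
proof -
  have rep: "is_rep G d \<rho>" using irr unfolding is_irr_rep_def by auto
  hence d: "0 < d" unfolding is_rep_def by auto
  from eigen_exists[OF A d] obtain c v where v: "v \<in> carrier_vec d" "v \<noteq> 0\<^sub>v d" "A *\<^sub>v v = c \<cdot>\<^sub>v v"
    by auto
  define W where "W = {w \<in> carrier_vec d. A *\<^sub>v w = c \<cdot>\<^sub>v w}"
  have sub: "is_subspace d W" unfolding is_subspace_def W_def
  proof (intro conjI ballI allI)
    show "{w \<in> carrier_vec d. A *\<^sub>v w = c \<cdot>\<^sub>v w} \<subseteq> carrier_vec d" by auto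
    show "0\<^sub>v d \<in> {w \<in> carrier_vec d. A *\<^sub>v w = c \<cdot>\<^sub>v w}"
      using A by (auto intro!: eq_vecI)
  next
    fix x y assume x: "x \<in> {w \<in> carrier_vec d. A *\<^sub>v w = c \<cdot>\<^sub>v w}" and y: "y \<in> {w \<in> carrier_vec d. A *\<^sub>v w = c \<cdot>\<^sub>v w}"
    thus "x + y \<in> {w \<in> carrier_vec d. A *\<^sub>v w = c \<cdot>\<^sub>v w}"
      using A by (auto simp: mult_add_distrib_mat_vec smult_add_distrib_vec)
  next
    fix a x assume x: "x \<in> {w \<in> carrier_vec d. A *\<^sub>v w = c \<cdot>\<^sub>v w}"
    thus "a \<cdot>\<^sub>v x \<in> {w \<in> carrier_vec d. A *\<^sub>v w = c \<cdot>\<^sub>v w}"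
      using A by (auto simp: mult_mat_vec smult_smult_assoc mult.commute)
  qed
  have inv: "\<forall>g\<in>carrier G. \<forall>w\<in>W. \<rho> g *\<^sub>v w \<in> W"
  proof (intro ballI)
    fix g w assume g: "g \<in> carrier G" and w: "w \<in> W"
    have rhoc: "\<rho> g \<in> carrier_mat d d" by (rule rep_carrier[OF rep g])
    have wc: "w \<in> carrier_vec d" and Aw: "A *\<^sub>v w = c \<cdot>\<^sub>v w" using w unfolding W_def by auto
    have "A *\<^sub>v (\<rho> g *\<^sub>v w) = (A * \<rho> g) *\<^sub>v w" using A rhoc wc by (simp add: assoc_mult_mat_vec)
    also have "\<dots> = (\<rho> g * A) *\<^sub>v w" using comm g by simp
    also have "\<dots> = \<rho> g *\<^sub>v (A *\<^sub>v w)" using A rhoc wc by (simp add: assoc_mult_mat_vec)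
    also have "\<dots> = c \<cdot>\<^sub>v (\<rho> g *\<^sub>v w)" using Aw rhoc wc by (simp add: mult_mat_vec)
    finally show "\<rho> g *\<^sub>v w \<in> W" unfolding W_def using rhoc wc by auto
  qed
  have "W \<noteq> {0\<^sub>v d}" using v unfolding W_def by auto
  hence Wall: "W = carrier_vec d" using irr sub inv unfolding is_irr_rep_def by auto
  have "A = c \<cdot>\<^sub>m 1\<^sub>m d"
  proof (rule eq_matI)
    fix i j assume "i < dim_row (c \<cdot>\<^sub>m 1\<^sub>m d)" "j < dim_col (c \<cdot>\<^sub>m 1\<^sub>m d)"
    hence i: "i < d" and j: "j < d" by auto
    have "unit_vec d j \<in> W" using Wall by simp
    hence "A *\<^sub>v unit_vec d j = c \<cdot>\<^sub>v unit_vec d j" unfolding W_def by auto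
    hence "col A j = c \<cdot>\<^sub>v unit_vec d j" using mat_vec_unit[OF A j] by simp
    hence "col A j $ i = c * unit_vec d j $ i" using i by simp
    thus "A $$ (i,j) = (c \<cdot>\<^sub>m 1\<^sub>m d) $$ (i,j)" using A i j by (simp add: unit_vec_def)
  qed (use A in auto)
  thus ?thesis by blast
qed

lemma schur2:
  assumes irr1: "is_irr_rep G d1 \<rho>" and irr2: "is_irr_rep G d2 \<sigma>"
    and B: "B \<in> carrier_mat d1 d2" and inter: "\<forall>g\<in>carrier G. \<rho> g * B = B * \<sigma> g"
    and nz: "B \<noteq> 0\<^sub>m d1 d2"
  shows "character G \<rho> = character G \<sigma>"
proof -
  have rep1: "is_rep G d1 \<rho>" using irr1 unfolding is_irr_rep_def by auto
  have rep2: "is_rep G d2 \<sigma>" using irr2 unfolding is_irr_rep_def by auto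
  define K where "K = {v \<in> carrier_vec d2. B *\<^sub>v v = 0\<^sub>v d1}"
  have subK: "is_subspace d2 K" unfolding is_subspace_def K_def
    using B by (auto simp: mult_add_distrib_mat_vec mult_mat_vec intro!: eq_vecI)
  have invK: "\<forall>g\<in>carrier G. \<forall>w\<in>K. \<sigma> g *\<^sub>v w \<in> K"
  proof (intro ballI)
    fix g w assume g: "g \<in> carrier G" and w: "w \<in> K"
    have sigc: "\<sigma> g \<in> carrier_mat d2 d2" by (rule rep_carrier[OF rep2 g])
    have rhoc: "\<rho> g \<in> carrier_mat d1 d1" by (rule rep_carrier[OF rep1 g])
    have wc: "w \<in> carrier_vec d2" and Bw: "B *\<^sub>v w = 0\<^sub>v d1" using w unfolding K_def by auto
    have "B *\<^sub>v (\<sigma> g *\<^sub>v w) = (B * \<sigma> g) *\<^sub>v w" using B sigc wc by (simp add: assoc_mult_mat_vec)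
    also have "\<dots> = (\<rho> g * B) *\<^sub>v w" using inter g by simp
    also have "\<dots> = \<rho> g *\<^sub>v (B *\<^sub>v w)" using B rhoc wc by (simp add: assoc_mult_mat_vec)
    also have "\<dots> = 0\<^sub>v d1" using Bw rhoc by (auto intro!: eq_vecI)
    finally show "\<sigma> g *\<^sub>v w \<in> K" unfolding K_def using sigc wc by auto
  qed
  from nonzero_mat_col[OF B nz] obtain j0 where j0: "j0 < d2" and cj0: "col B j0 \<noteq> 0\<^sub>v d1" by auto
  have "unit_vec d2 j0 \<notin> K" unfolding K_def using mat_vec_unit[OF B j0] cj0 by auto
  hence "K \<noteq> carrier_vec d2" using j0 by auto
  hence K0: "K = {0\<^sub>v d2}" using irr2 subK invK unfolding is_irr_rep_def by auto
  define I where "I = {B *\<^sub>v v | v. v \<in> carrier_vec d2}"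
  have subI: "is_subspace d1 I" unfolding is_subspace_def I_def
  proof (intro conjI ballI allI)
    show "{B *\<^sub>v v | v. v \<in> carrier_vec d2} \<subseteq> carrier_vec d1" using B by auto
    have "B *\<^sub>v 0\<^sub>v d2 = 0\<^sub>v d1" using B by (auto intro!: eq_vecI)
    thus "0\<^sub>v d1 \<in> {B *\<^sub>v v | v. v \<in> carrier_vec d2}"
      by (intro CollectI exI[of _ "0\<^sub>v d2"]) auto
  next
    fix x y assume "x \<in> {B *\<^sub>v v | v. v \<in> carrier_vec d2}" "y \<in> {B *\<^sub>v v | v. v \<in> carrier_vec d2}"
    then obtain v w where "v \<in> carrier_vec d2" "w \<in> carrier_vec d2" "x = B *\<^sub>v v" "y = B *\<^sub>v w" by auto
    thus "x + y \<in> {B *\<^sub>v v | v. v \<in> carrier_vec d2}" using B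
      by (intro CollectI exI[of _ "v + w"]) (auto simp: mult_add_distrib_mat_vec)
  next
    fix a x assume "x \<in> {B *\<^sub>v v | v. v \<in> carrier_vec d2}"
    then obtain v where "v \<in> carrier_vec d2" "x = B *\<^sub>v v" by auto
    thus "a \<cdot>\<^sub>v x \<in> {B *\<^sub>v v | v. v \<in> carrier_vec d2}" using B
      by (intro CollectI exI[of _ "a \<cdot>\<^sub>v v"]) (auto simp: mult_mat_vec)
  qed
  have invI: "\<forall>g\<in>carrier G. \<forall>w\<in>I. \<rho> g *\<^sub>v w \<in> I"
  proof (intro ballI)
    fix g w assume g: "g \<in> carrier G" and w: "w \<in> I"
    have sigc: "\<sigma> g \<in> carrier_mat d2 d2" by (rule rep_carrier[OF rep2 g])
    have rhoc: "\<rho> g \<in> carrier_mat d1 d1" by (rule rep_carrier[OF rep1 g])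
    from w obtain v where v: "v \<in> carrier_vec d2" and wv: "w = B *\<^sub>v v" unfolding I_def by auto
    have "\<rho> g *\<^sub>v w = (\<rho> g * B) *\<^sub>v v" using B rhoc v wv by (simp add: assoc_mult_mat_vec)
    also have "\<dots> = (B * \<sigma> g) *\<^sub>v v" using inter g by simp
    also have "\<dots> = B *\<^sub>v (\<sigma> g *\<^sub>v v)" using B sigc v by (simp add: assoc_mult_mat_vec)
    finally show "\<rho> g *\<^sub>v w \<in> I" unfolding I_def using sigc v by auto
  qed
  have "col B j0 \<in> I" unfolding I_def using mat_vec_unit[OF B j0] by (metis (mono_tags, lifting) mem_Collect_eq unit_vec_carrier)
  hence "I \<noteq> {0\<^sub>v d1}" using cj0 by auto
  hence Iall: "I = carrier_vec d1" using irr1 subI invI unfolding is_irr_rep_def by auto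
  have "\<forall>i. \<exists>c. i < d1 \<longrightarrow> c \<in> carrier_vec d2 \<and> B *\<^sub>v c = unit_vec d1 i"
  proof (intro allI impI)
    fix i
    show "\<exists>c. i < d1 \<longrightarrow> c \<in> carrier_vec d2 \<and> B *\<^sub>v c = unit_vec d1 i"
    proof (cases "i < d1")
      case True
      hence "unit_vec d1 i \<in> I" using Iall by simp
      thus ?thesis unfolding I_def by auto
    qed auto
  qed
  then obtain cf where cf: "\<And>i. i < d1 \<Longrightarrow> cf i \<in> carrier_vec d2 \<and> B *\<^sub>v cf i = unit_vec d1 i"
    by metis
  define C where "C = mat d2 d1 (\<lambda>(l,i). cf i $ l)"
  have Cc: "C \<in> carrier_mat d2 d1" unfolding C_def by simp
  have colC: "col C i = cf i" if i: "i < d1" for i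
    using cf[OF i] i unfolding C_def by (auto intro!: eq_vecI)
  have BC: "B * C = 1\<^sub>m d1"
  proof (rule eq_matI)
    fix i j assume "i < dim_row (1\<^sub>m d1 :: complex mat)" "j < dim_col (1\<^sub>m d1 :: complex mat)"
    hence i: "i < d1" and j: "j < d1" by auto
    have "(B * C) $$ (i,j) = row B i \<bullet> col C j" using B Cc i j by simp
    also have "\<dots> = (B *\<^sub>v cf j) $ i" using colC[OF j] B i by simp
    also have "\<dots> = 1\<^sub>m d1 $$ (i,j)" using cf[OF j] i j by simp
    finally show "(B * C) $$ (i,j) = 1\<^sub>m d1 $$ (i,j)" .
  qed (use B Cc in auto)
  have CB: "C * B = 1\<^sub>m d2"
  proof -
    have CBc: "C * B \<in> carrier_mat d2 d2" using Cc B by simp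
    have "B * (C * B) = (B * C) * B" using B Cc by (simp add: assoc_mult_mat[of _ d1 d2 _ d1 _ d2])
    also have "\<dots> = B" using BC B by simp
    finally have BCB: "B * (C * B) = B" .
    have colCB: "col (C * B) j = unit_vec d2 j" if j: "j < d2" for j
    proof -
      have dCB: "dim_row (C * B) = d2" "dim_col (C * B) = d2" using CBc by auto
      have x: "col (C * B) j \<in> carrier_vec d2" unfolding carrier_vec_def using dCB by simp
      have u: "unit_vec d2 j \<in> carrier_vec d2" by simp
      have "B *\<^sub>v col (C * B) j = B *\<^sub>v ((C * B) *\<^sub>v unit_vec d2 j)"
        using mat_vec_unit[OF CBc j] by simp
      also have "\<dots> = (B * (C * B)) *\<^sub>v unit_vec d2 j"
        using assoc_mult_mat_vec[OF B CBc u] by simp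
      also have "\<dots> = B *\<^sub>v unit_vec d2 j" using BCB by simp
      finally have e: "B *\<^sub>v col (C * B) j = B *\<^sub>v unit_vec d2 j" .
      have "B *\<^sub>v (col (C * B) j - unit_vec d2 j) = B *\<^sub>v col (C * B) j - B *\<^sub>v unit_vec d2 j"
        using B x u by (simp add: mult_minus_distrib_mat_vec)
      also have "\<dots> = 0\<^sub>v d1" unfolding e using B by (auto intro!: eq_vecI)
      finally have "col (C * B) j - unit_vec d2 j \<in> K" unfolding K_def using x by auto
      hence z: "col (C * B) j - unit_vec d2 j = 0\<^sub>v d2" using K0 by simp
      show ?thesis
      proof (rule eq_vecI)
        fix i assume "i < dim_vec (unit_vec d2 j)"
        hence i: "i < d2" by simp
        have "(col (C * B) j - unit_vec d2 j) $ i = 0" using z i by simp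
        thus "col (C * B) j $ i = unit_vec d2 j $ i" using i x dCB by simp
      qed (use dCB in simp)
    qed
    show ?thesis
    proof (rule eq_matI)
      fix i j assume "i < dim_row (1\<^sub>m d2 :: complex mat)" "j < dim_col (1\<^sub>m d2 :: complex mat)"
      hence i: "i < d2" and j: "j < d2" by auto
      have dCB: "dim_row (C * B) = d2" "dim_col (C * B) = d2" using CBc by auto
      have "(C * B) $$ (i,j) = col (C * B) j $ i" using dCB i j by simp
      also have "\<dots> = 1\<^sub>m d2 $$ (i,j)" using colCB[OF j] i j by simp
      finally show "(C * B) $$ (i,j) = 1\<^sub>m d2 $$ (i,j)" .
    qed (use CBc in auto)
  qed
  show ?thesis
  proof
    fix g
    show "character G \<rho> g = character G \<sigma> g"
    proof (cases "g \<in> carrier G")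
      case True
      have sigc: "\<sigma> g \<in> carrier_mat d2 d2" by (rule rep_carrier[OF rep2 True])
      have rhoc: "\<rho> g \<in> carrier_mat d1 d1" by (rule rep_carrier[OF rep1 True])
      have "\<sigma> g = (C * B) * \<sigma> g" using CB sigc by simp
      also have "\<dots> = C * (B * \<sigma> g)" using Cc B sigc by (simp add: assoc_mult_mat[of _ d2 d1 _ d2 _ d2])
      also have "\<dots> = C * (\<rho> g * B)" using inter True by simp
      finally have "mat_trace (\<sigma> g) = mat_trace (C * (\<rho> g * B))" by simp
      also have "\<dots> = mat_trace ((\<rho> g * B) * C)" by (rule trace_comm) (use Cc B rhoc in auto)
      also have "(\<rho> g * B) * C = \<rho> g * (B * C)" using Cc B rhoc by (simp add: assoc_mult_mat[of _ d1 d1 _ d2 _ d1])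
      also have "\<dots> = \<rho> g" using BC rhoc by simp
      finally show ?thesis unfolding character_def using True by simp
    qed (simp add: character_def)
  qed
qed

end

(* ---- part 4 ---- *)

definition csum :: "('a,'m) monoid_scheme \<Rightarrow> nat \<Rightarrow> nat \<Rightarrow> ('a \<Rightarrow> complex mat) \<Rightarrow> complex mat" where
  "csum G nr nc F = mat nr nc (\<lambda>(i,j). \<Sum>g\<in>carrier G. F g $$ (i,j))"

definition Eab :: "nat \<Rightarrow> nat \<Rightarrow> nat \<Rightarrow> nat \<Rightarrow> complex mat" where
  "Eab d1 d2 a b = mat d1 d2 (\<lambda>(i,j). if i = a \<and> j = b then 1 else 0)"

lemma csum_carrier[simp]: "csum G nr nc F \<in> carrier_mat nr nc"
  unfolding csum_def by simp

lemma csum_index: "i < nr \<Longrightarrow> j < nc \<Longrightarrow> csum G nr nc F $$ (i,j) = (\<Sum>g\<in>carrier G. F g $$ (i,j))"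
  unfolding csum_def by simp

lemma csum_left:
  assumes P: "P \<in> carrier_mat n1 nr" and F: "\<forall>g\<in>carrier G. F g \<in> carrier_mat nr nc"
  shows "P * csum G nr nc F = csum G n1 nc (\<lambda>g. P * F g)"
proof (rule eq_matI)
  fix i j assume "i < dim_row (csum G n1 nc (\<lambda>g. P * F g))" "j < dim_col (csum G n1 nc (\<lambda>g. P * F g))"
  hence i: "i < n1" and j: "j < nc" by (auto simp: csum_def)
  have "(P * csum G nr nc F) $$ (i,j) = (\<Sum>l<nr. P $$ (i,l) * csum G nr nc F $$ (l,j))"
    by (rule mult_index[OF P csum_carrier i j])
  also have "\<dots> = (\<Sum>l<nr. \<Sum>g\<in>carrier G. P $$ (i,l) * F g $$ (l,j))"
    using j by (simp add: csum_index sum_distrib_left)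
  also have "\<dots> = (\<Sum>g\<in>carrier G. \<Sum>l<nr. P $$ (i,l) * F g $$ (l,j))" by (rule sum.swap)
  also have "\<dots> = (\<Sum>g\<in>carrier G. (P * F g) $$ (i,j))"
    by (rule sum.cong[OF refl], rule mult_index[OF P _ i j, symmetric]) (use F in auto)
  also have "\<dots> = csum G n1 nc (\<lambda>g. P * F g) $$ (i,j)" using i j by (simp add: csum_index)
  finally show "(P * csum G nr nc F) $$ (i,j) = csum G n1 nc (\<lambda>g. P * F g) $$ (i,j)" .
qed (use P in \<open>auto simp: csum_def\<close>)

lemma csum_right:
  assumes Q: "Q \<in> carrier_mat nc n2" and F: "\<forall>g\<in>carrier G. F g \<in> carrier_mat nr nc"
  shows "csum G nr nc F * Q = csum G nr n2 (\<lambda>g. F g * Q)"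
proof (rule eq_matI)
  fix i j assume "i < dim_row (csum G nr n2 (\<lambda>g. F g * Q))" "j < dim_col (csum G nr n2 (\<lambda>g. F g * Q))"
  hence i: "i < nr" and j: "j < n2" by (auto simp: csum_def)
  have "(csum G nr nc F * Q) $$ (i,j) = (\<Sum>l<nc. csum G nr nc F $$ (i,l) * Q $$ (l,j))"
    by (rule mult_index[OF csum_carrier Q i j])
  also have "\<dots> = (\<Sum>l<nc. \<Sum>g\<in>carrier G. F g $$ (i,l) * Q $$ (l,j))"
    using i by (simp add: csum_index sum_distrib_right)
  also have "\<dots> = (\<Sum>g\<in>carrier G. \<Sum>l<nc. F g $$ (i,l) * Q $$ (l,j))" by (rule sum.swap)
  also have "\<dots> = (\<Sum>g\<in>carrier G. (F g * Q) $$ (i,j))"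
    by (rule sum.cong[OF refl], rule mult_index[OF _ Q i j, symmetric]) (use F in auto)
  also have "\<dots> = csum G nr n2 (\<lambda>g. F g * Q) $$ (i,j)" using i j by (simp add: csum_index)
  finally show "(csum G nr nc F * Q) $$ (i,j) = csum G nr n2 (\<lambda>g. F g * Q) $$ (i,j)" .
qed (use Q in \<open>auto simp: csum_def\<close>)

lemma csum_cong: "(\<And>g. g \<in> carrier G \<Longrightarrow> F g = F' g) \<Longrightarrow> csum G nr nc F = csum G nr nc F'"
  unfolding csum_def by (intro cong_mat refl) (auto intro!: sum.cong)

lemma csum_trace:
  assumes "\<forall>g\<in>carrier G. F g \<in> carrier_mat d d"
  shows "mat_trace (csum G d d F) = (\<Sum>g\<in>carrier G. mat_trace (F g))"
proof -
  have "mat_trace (csum G d d F) = (\<Sum>i<d. \<Sum>g\<in>carrier G. F g $$ (i,i))"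
    unfolding mat_trace_def by (simp add: csum_index csum_def)
  also have "\<dots> = (\<Sum>g\<in>carrier G. \<Sum>i<d. F g $$ (i,i))" by (rule sum.swap)
  also have "\<dots> = (\<Sum>g\<in>carrier G. mat_trace (F g))"
    unfolding mat_trace_def by (rule sum.cong[OF refl]) (use assms in auto)
  finally show ?thesis .
qed

lemma Eab_index:
  assumes P: "P \<in> carrier_mat n d1" and Q: "Q \<in> carrier_mat d2 m"
    and a: "a < d1" and b: "b < d2" and i: "i < n" and j: "j < m"
  shows "(P * Eab d1 d2 a b * Q) $$ (i,j) = P $$ (i,a) * Q $$ (b,j)"
proof -
  have E: "Eab d1 d2 a b \<in> carrier_mat d1 d2" unfolding Eab_def by simp
  have PE: "(P * Eab d1 d2 a b) $$ (i,l) = (if l = b then P $$ (i,a) else 0)" if l: "l < d2" for l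
  proof -
    have "(P * Eab d1 d2 a b) $$ (i,l) = (\<Sum>k<d1. P $$ (i,k) * Eab d1 d2 a b $$ (k,l))"
      by (rule mult_index[OF P E i l])
    also have "\<dots> = (\<Sum>k<d1. if k = a then (if l = b then P $$ (i,a) else 0) else 0)"
      by (rule sum.cong[OF refl]) (use l in \<open>auto simp: Eab_def\<close>)
    also have "\<dots> = (if l = b then P $$ (i,a) else 0)" using a by simp
    finally show ?thesis .
  qed
  have "(P * Eab d1 d2 a b * Q) $$ (i,j) = (\<Sum>l<d2. (P * Eab d1 d2 a b) $$ (i,l) * Q $$ (l,j))"
    by (rule mult_index[OF mult_carrier_mat[OF P E] Q i j])
  also have "\<dots> = (\<Sum>l<d2. if l = b then P $$ (i,a) * Q $$ (b,j) else 0)"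
    by (rule sum.cong[OF refl]) (auto simp: PE)
  also have "\<dots> = P $$ (i,a) * Q $$ (b,j)" using b by simp
  finally show ?thesis .
qed

lemma Eab_trace: "a < d \<Longrightarrow> b < d \<Longrightarrow> mat_trace (Eab d d a b) = (if a = b then 1 else 0)"
  unfolding mat_trace_def Eab_def by (auto simp: sum.delta intro!: sum.neutral)

context group begin

lemma csum_reindex:
  assumes h: "h \<in> carrier G"
  shows "csum G nr nc (\<lambda>g. F (h \<otimes> g)) = csum G nr nc F"
proof -
  have "(\<Sum>g\<in>carrier G. F (h \<otimes> g) $$ (i,j)) = (\<Sum>g\<in>carrier G. F g $$ (i,j))" for i j
  proof -
    have "(\<Sum>g\<in>carrier G. F g $$ (i,j)) = (\<Sum>g\<in>(\<lambda>x. h \<otimes> x) ` carrier G. F g $$ (i,j))"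
      using surj_const_mult[OF h] by simp
    also have "\<dots> = (\<Sum>g\<in>carrier G. F (h \<otimes> g) $$ (i,j))"
      by (subst sum.reindex[OF inj_on_cmult[OF h]]) simp
    finally show ?thesis by simp
  qed
  thus ?thesis unfolding csum_def by simp
qed

lemma inter_avg:
  assumes r1: "is_rep G d1 \<rho>" and r2: "is_rep G d2 \<sigma>" and X: "X \<in> carrier_mat d1 d2"
    and h: "h \<in> carrier G"
  shows "\<rho> h * csum G d1 d2 (\<lambda>g. \<rho> g * X * \<sigma> (inv g)) = csum G d1 d2 (\<lambda>g. \<rho> g * X * \<sigma> (inv g)) * \<sigma> h"
proof -
  note c1 = rep_carrier[OF r1] and c2 = rep_carrier[OF r2]
  define H where "H x = \<rho> x * X * \<sigma> (inv x \<otimes> h)" for x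
  have cc: "\<forall>g\<in>carrier G. \<rho> g * X * \<sigma> (inv g) \<in> carrier_mat d1 d2"
    using c1 c2 X by (meson inv_closed mult_carrier_mat)
  have "\<rho> h * csum G d1 d2 (\<lambda>g. \<rho> g * X * \<sigma> (inv g)) = csum G d1 d2 (\<lambda>g. \<rho> h * (\<rho> g * X * \<sigma> (inv g)))"
    by (rule csum_left[OF c1[OF h] cc])
  also have "\<dots> = csum G d1 d2 (\<lambda>g. H (h \<otimes> g))"
  proof (rule csum_cong)
    fix g assume g: "g \<in> carrier G"
    have "inv (h \<otimes> g) \<otimes> h = inv g" using g h by (simp add: inv_mult_group m_assoc)
    hence "H (h \<otimes> g) = \<rho> h * \<rho> g * X * \<sigma> (inv g)" unfolding H_def rep_mult[OF r1 h g] by simp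
    also have "\<dots> = \<rho> h * (\<rho> g * X * \<sigma> (inv g))"
      using c1[OF h] c1[OF g] c2[OF inv_closed[OF g]] X by (simp add: assoc_mult_mat[of _ d1 d1 _ d1 _ d2] assoc_mult_mat[of _ d1 d1 _ d2 _ d2] assoc_mult_mat[of _ d1 d2 _ d2 _ d2])
    finally show "\<rho> h * (\<rho> g * X * \<sigma> (inv g)) = H (h \<otimes> g)" by simp
  qed
  also have "\<dots> = csum G d1 d2 H" by (rule csum_reindex[OF h])
  also have "\<dots> = csum G d1 d2 (\<lambda>g. \<rho> g * X * \<sigma> (inv g) * \<sigma> h)"
  proof (rule csum_cong)
    fix g assume g: "g \<in> carrier G"
    show "H g = \<rho> g * X * \<sigma> (inv g) * \<sigma> h" unfolding H_def rep_mult[OF r2 inv_closed[OF g] h]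
      using c1[OF h] c1[OF g] c2[OF inv_closed[OF g]] c2[OF h] X
      by (simp add: assoc_mult_mat[of _ d1 d2 _ d2 _ d2] assoc_mult_mat[of _ d1 d1 _ d2 _ d2])
  qed
  also have "\<dots> = csum G d1 d2 (\<lambda>g. \<rho> g * X * \<sigma> (inv g)) * \<sigma> h"
    by (rule csum_right[OF c2[OF h] cc, symmetric])
  finally show ?thesis .
qed

end

(* ---- part 5 ---- *)

context group begin

lemma char_trace: "is_rep G d \<rho> \<Longrightarrow> g \<in> carrier G \<Longrightarrow> character G \<rho> g = (\<Sum>i<d. \<rho> g $$ (i,i))"
  unfolding character_def mat_trace_def using rep_carrier[of d \<rho> g] by auto

lemma irr_rep: "is_irr_rep G d \<rho> \<Longrightarrow> is_rep G d \<rho>"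
  unfolding is_irr_rep_def by auto

lemma Eab_carrier[simp]: "Eab d1 d2 a b \<in> carrier_mat d1 d2"
  unfolding Eab_def by simp

lemma orth_entries_diff:
  assumes i1: "is_irr_rep G d1 \<rho>" and i2: "is_irr_rep G d2 \<sigma>"
    and ne: "character G \<rho> \<noteq> character G \<sigma>"
    and a: "a < d1" and b: "b < d2" and i: "i < d1" and j: "j < d2"
  shows "(\<Sum>g\<in>carrier G. \<rho> g $$ (i,a) * \<sigma> (inv g) $$ (b,j)) = 0"
proof -
  note r1 = irr_rep[OF i1] and r2 = irr_rep[OF i2]
  define B where "B = csum G d1 d2 (\<lambda>g. \<rho> g * Eab d1 d2 a b * \<sigma> (inv g))"
  have Bc: "B \<in> carrier_mat d1 d2" unfolding B_def by simp
  have inter: "\<forall>h\<in>carrier G. \<rho> h * B = B * \<sigma> h"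
    unfolding B_def using inter_avg[OF r1 r2 Eab_carrier] by auto
  have "B = 0\<^sub>m d1 d2" using schur2[OF i1 i2 Bc inter] ne by auto
  hence "0 = B $$ (i,j)" using i j by simp
  also have "\<dots> = (\<Sum>g\<in>carrier G. (\<rho> g * Eab d1 d2 a b * \<sigma> (inv g)) $$ (i,j))"
    unfolding B_def using i j by (simp add: csum_index)
  also have "\<dots> = (\<Sum>g\<in>carrier G. \<rho> g $$ (i,a) * \<sigma> (inv g) $$ (b,j))"
    by (rule sum.cong[OF refl], rule Eab_index[OF _ _ a b i j])
      (use rep_carrier[OF r1] rep_carrier[OF r2] in auto)
  finally show ?thesis by simp
qed

lemma orth_diff:
  assumes i1: "is_irr_rep G d1 \<rho>" and i2: "is_irr_rep G d2 \<sigma>"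
    and ne: "character G \<rho> \<noteq> character G \<sigma>"
  shows "(\<Sum>g\<in>carrier G. character G \<rho> g * character G \<sigma> (inv g)) = 0"
proof -
  note r1 = irr_rep[OF i1] and r2 = irr_rep[OF i2]
  have "(\<Sum>g\<in>carrier G. character G \<rho> g * character G \<sigma> (inv g)) =
        (\<Sum>g\<in>carrier G. \<Sum>i<d1. \<Sum>j<d2. \<rho> g $$ (i,i) * \<sigma> (inv g) $$ (j,j))"
    by (rule sum.cong[OF refl]) (simp add: char_trace[OF r1] char_trace[OF r2] sum_product)
  also have "\<dots> = (\<Sum>i<d1. \<Sum>g\<in>carrier G. \<Sum>j<d2. \<rho> g $$ (i,i) * \<sigma> (inv g) $$ (j,j))"
    by (rule sum.swap)
  also have "\<dots> = (\<Sum>i<d1. \<Sum>j<d2. \<Sum>g\<in>carrier G. \<rho> g $$ (i,i) * \<sigma> (inv g) $$ (j,j))"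
    by (rule sum.cong[OF refl], rule sum.swap)
  also have "\<dots> = 0" using orth_entries_diff[OF i1 i2 ne] by simp
  finally show ?thesis .
qed

lemma orth_entries_same:
  assumes irr: "is_irr_rep G d \<rho>"
    and a: "a < d" and b: "b < d" and i: "i < d" and j: "j < d"
  shows "(\<Sum>g\<in>carrier G. \<rho> g $$ (i,a) * \<rho> (inv g) $$ (b,j)) =
     (if a = b \<and> i = j then of_nat (card (carrier G)) / of_nat d else 0)"
proof -
  note r = irr_rep[OF irr]
  note c = rep_carrier[OF r]
  have d: "0 < d" using r unfolding is_rep_def by auto
  define B where "B = csum G d d (\<lambda>g. \<rho> g * Eab d d a b * \<rho> (inv g))"
  have Bc: "B \<in> carrier_mat d d" unfolding B_def by simp
  have inter: "\<forall>h\<in>carrier G. B * \<rho> h = \<rho> h * B"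
    unfolding B_def using inter_avg[OF r r Eab_carrier] by auto
  from schur1[OF irr Bc inter] obtain cc where Bcc: "B = cc \<cdot>\<^sub>m 1\<^sub>m d" by auto
  have "mat_trace B = (\<Sum>g\<in>carrier G. mat_trace (\<rho> g * Eab d d a b * \<rho> (inv g)))"
    unfolding B_def by (rule csum_trace) (use c in \<open>meson inv_closed mult_carrier_mat Eab_carrier\<close>)
  also have "\<dots> = (\<Sum>g\<in>carrier G. mat_trace (Eab d d a b))"
  proof (rule sum.cong[OF refl])
    fix g assume g: "g \<in> carrier G"
    have "mat_trace (\<rho> g * Eab d d a b * \<rho> (inv g)) = mat_trace (\<rho> (inv g) * (\<rho> g * Eab d d a b))"
      by (rule trace_comm) (use c[OF g] c[OF inv_closed[OF g]] in auto)
    also have "\<rho> (inv g) * (\<rho> g * Eab d d a b) = (\<rho> (inv g) * \<rho> g) * Eab d d a b"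
      using c[OF g] c[OF inv_closed[OF g]] by (simp add: assoc_mult_mat[of _ d d _ d _ d])
    also have "\<dots> = Eab d d a b" using rep_inv'[OF r g] left_mult_one_mat[OF Eab_carrier[of d d a b]] by simp
    finally show "mat_trace (\<rho> g * Eab d d a b * \<rho> (inv g)) = mat_trace (Eab d d a b)" .
  qed
  also have "\<dots> = of_nat (card (carrier G)) * (if a = b then 1 else 0)" using Eab_trace[OF a b] by simp
  finally have tr: "mat_trace B = of_nat (card (carrier G)) * (if a = b then 1 else 0)" .
  have "mat_trace B = of_nat d * cc" unfolding Bcc by (rule trace_smult_one)
  with tr d have ccv: "cc = (if a = b then of_nat (card (carrier G)) / of_nat d else 0)"
    by (auto simp: field_simps)
  have "(\<Sum>g\<in>carrier G. \<rho> g $$ (i,a) * \<rho> (inv g) $$ (b,j)) =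
        (\<Sum>g\<in>carrier G. (\<rho> g * Eab d d a b * \<rho> (inv g)) $$ (i,j))"
    by (rule sum.cong[OF refl], rule Eab_index[OF _ _ a b i j, symmetric]) (use c in auto)
  also have "\<dots> = B $$ (i,j)" unfolding B_def using i j by (simp add: csum_index)
  also have "\<dots> = (if i = j then cc else 0)" unfolding Bcc using i j by simp
  finally show ?thesis unfolding ccv by auto
qed

lemma orth_same:
  assumes irr: "is_irr_rep G d \<rho>"
  shows "(\<Sum>g\<in>carrier G. character G \<rho> g * character G \<rho> (inv g)) = of_nat (card (carrier G))"
proof -
  note r = irr_rep[OF irr]
  have d: "0 < d" using r unfolding is_rep_def by auto
  have "(\<Sum>g\<in>carrier G. character G \<rho> g * character G \<rho> (inv g)) =
        (\<Sum>g\<in>carrier G. \<Sum>i<d. \<Sum>j<d. \<rho> g $$ (i,i) * \<rho> (inv g) $$ (j,j))"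
    by (rule sum.cong[OF refl]) (simp add: char_trace[OF r] sum_product)
  also have "\<dots> = (\<Sum>i<d. \<Sum>g\<in>carrier G. \<Sum>j<d. \<rho> g $$ (i,i) * \<rho> (inv g) $$ (j,j))"
    by (rule sum.swap)
  also have "\<dots> = (\<Sum>i<d. \<Sum>j<d. \<Sum>g\<in>carrier G. \<rho> g $$ (i,i) * \<rho> (inv g) $$ (j,j))"
    by (rule sum.cong[OF refl], rule sum.swap)
  also have "\<dots> = (\<Sum>i<d. \<Sum>j<d. if i = j then of_nat (card (carrier G)) / of_nat d else 0)"
    by (intro sum.cong refl) (simp add: orth_entries_same[OF irr])
  also have "\<dots> = (\<Sum>i<d. of_nat (card (carrier G)) / (of_nat d :: complex))"
    by (intro sum.cong refl) simp
  also have "\<dots> = of_nat (card (carrier G))" using d by simp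
  finally show ?thesis .
qed

lemma orth:
  assumes chi: "\<chi> \<in> Irr G" and psi: "\<psi> \<in> Irr G"
  shows "(\<Sum>g\<in>carrier G. \<chi> g * \<psi> (inv g)) = (if \<chi> = \<psi> then of_nat (card (carrier G)) else 0)"
proof -
  from chi obtain d1 \<rho> where i1: "is_irr_rep G d1 \<rho>" and c1: "\<chi> = character G \<rho>" unfolding Irr_def by auto
  from psi obtain d2 \<sigma> where i2: "is_irr_rep G d2 \<sigma>" and c2: "\<psi> = character G \<sigma>" unfolding Irr_def by auto
  show ?thesis
  proof (cases "\<chi> = \<psi>")
    case True
    thus ?thesis using orth_same[OF i1] c1 by simp
  next
    case False
    thus ?thesis using orth_diff[OF i1 i2] c1 c2 by simp
  qed
qed

end

(* ---- part 6 ---- *)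

definition gsum :: "('a,'m) monoid_scheme \<Rightarrow> ('a \<Rightarrow> complex fps) \<Rightarrow> ('a \<Rightarrow> complex mat) \<Rightarrow> nat \<Rightarrow> nat \<Rightarrow> complex fps mat" where
  "gsum G f \<rho> nr nc = mat nr nc (\<lambda>(i,j). \<Sum>g\<in>carrier G. f g * fps_const (\<rho> g $$ (i,j)))"

definition classfun :: "('a,'m) monoid_scheme \<Rightarrow> ('a \<Rightarrow> complex fps) \<Rightarrow> bool" where
  "classfun G f \<longleftrightarrow> (\<forall>g\<in>carrier G. \<forall>h\<in>carrier G. f (h \<otimes>\<^bsub>G\<^esub> g \<otimes>\<^bsub>G\<^esub> inv\<^bsub>G\<^esub> h) = f g)"

definition coef :: "('a,'m) monoid_scheme \<Rightarrow> ('a \<Rightarrow> complex fps) \<Rightarrow> ('a \<Rightarrow> complex) \<Rightarrow> complex fps" where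
  "coef G f \<chi> = (\<Sum>g\<in>carrier G. f g * fps_const (\<chi> g)) * fps_const (1 / \<chi> \<one>\<^bsub>G\<^esub>)"

lemma gsum_carrier[simp]: "gsum G f \<rho> nr nc \<in> carrier_mat nr nc"
  unfolding gsum_def by simp

lemma gsum_dims[simp]: "dim_row (gsum G f \<rho> nr nc) = nr" "dim_col (gsum G f \<rho> nr nc) = nc"
  unfolding gsum_def by auto

lemma gsum_index: "i < nr \<Longrightarrow> j < nc \<Longrightarrow> gsum G f \<rho> nr nc $$ (i,j) = (\<Sum>g\<in>carrier G. f g * fps_const (\<rho> g $$ (i,j)))"
  unfolding gsum_def by simp

lemma gsum_cong: "(\<And>g. g \<in> carrier G \<Longrightarrow> \<rho> g = \<sigma> g) \<Longrightarrow> gsum G f \<rho> nr nc = gsum G f \<sigma> nr nc"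
  unfolding gsum_def by (intro cong_mat refl) (auto intro!: sum.cong)

lemma gsum_left:
  assumes P: "P \<in> carrier_mat n1 nr" and F: "\<forall>g\<in>carrier G. \<rho> g \<in> carrier_mat nr nc"
  shows "map_mat fps_const P * gsum G f \<rho> nr nc = gsum G f (\<lambda>g. P * \<rho> g) n1 nc"
proof (rule eq_matI)
  fix i j assume "i < dim_row (gsum G f (\<lambda>g. P * \<rho> g) n1 nc)" "j < dim_col (gsum G f (\<lambda>g. P * \<rho> g) n1 nc)"
  hence i: "i < n1" and j: "j < nc" by (auto simp: gsum_def)
  have P': "map_mat fps_const P \<in> carrier_mat n1 nr" using P by simp
  have "(map_mat fps_const P * gsum G f \<rho> nr nc) $$ (i,j) = (\<Sum>l<nr. fps_const (P $$ (i,l)) * gsum G f \<rho> nr nc $$ (l,j))"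
    using mult_index[OF P' gsum_carrier i j] P i by simp
  also have "\<dots> = (\<Sum>l<nr. \<Sum>g\<in>carrier G. f g * (fps_const (P $$ (i,l)) * fps_const (\<rho> g $$ (l,j))))"
    using j by (simp add: gsum_index sum_distrib_left ac_simps)
  also have "\<dots> = (\<Sum>g\<in>carrier G. \<Sum>l<nr. f g * (fps_const (P $$ (i,l)) * fps_const (\<rho> g $$ (l,j))))" by (rule sum.swap)
  also have "\<dots> = (\<Sum>g\<in>carrier G. f g * fps_const ((P * \<rho> g) $$ (i,j)))"
  proof (rule sum.cong[OF refl])
    fix g assume g: "g \<in> carrier G"
    have "(P * \<rho> g) $$ (i,j) = (\<Sum>l<nr. P $$ (i,l) * \<rho> g $$ (l,j))"
      by (rule mult_index[OF P _ i j]) (use F g in auto)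
    thus "(\<Sum>l<nr. f g * (fps_const (P $$ (i,l)) * fps_const (\<rho> g $$ (l,j)))) = f g * fps_const ((P * \<rho> g) $$ (i,j))"
      by (simp add: fpsc.hom_sum sum_distrib_left fps_const_mult)
  qed
  also have "\<dots> = gsum G f (\<lambda>g. P * \<rho> g) n1 nc $$ (i,j)" using i j by (simp add: gsum_index)
  finally show "(map_mat fps_const P * gsum G f \<rho> nr nc) $$ (i,j) = gsum G f (\<lambda>g. P * \<rho> g) n1 nc $$ (i,j)" .
qed (use P in \<open>auto simp: gsum_def\<close>)

lemma gsum_right:
  assumes Q: "Q \<in> carrier_mat nc n2" and F: "\<forall>g\<in>carrier G. \<rho> g \<in> carrier_mat nr nc"
  shows "gsum G f \<rho> nr nc * map_mat fps_const Q = gsum G f (\<lambda>g. \<rho> g * Q) nr n2"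
proof (rule eq_matI)
  fix i j assume "i < dim_row (gsum G f (\<lambda>g. \<rho> g * Q) nr n2)" "j < dim_col (gsum G f (\<lambda>g. \<rho> g * Q) nr n2)"
  hence i: "i < nr" and j: "j < n2" by (auto simp: gsum_def)
  have Q': "map_mat fps_const Q \<in> carrier_mat nc n2" using Q by simp
  have "(gsum G f \<rho> nr nc * map_mat fps_const Q) $$ (i,j) = (\<Sum>l<nc. gsum G f \<rho> nr nc $$ (i,l) * fps_const (Q $$ (l,j)))"
    using mult_index[OF gsum_carrier Q' i j] Q j by simp
  also have "\<dots> = (\<Sum>l<nc. \<Sum>g\<in>carrier G. f g * (fps_const (\<rho> g $$ (i,l)) * fps_const (Q $$ (l,j))))"
    using i by (simp add: gsum_index sum_distrib_right mult.assoc)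
  also have "\<dots> = (\<Sum>g\<in>carrier G. \<Sum>l<nc. f g * (fps_const (\<rho> g $$ (i,l)) * fps_const (Q $$ (l,j))))" by (rule sum.swap)
  also have "\<dots> = (\<Sum>g\<in>carrier G. f g * fps_const ((\<rho> g * Q) $$ (i,j)))"
  proof (rule sum.cong[OF refl])
    fix g assume g: "g \<in> carrier G"
    have "(\<rho> g * Q) $$ (i,j) = (\<Sum>l<nc. \<rho> g $$ (i,l) * Q $$ (l,j))"
      by (rule mult_index[OF _ Q i j]) (use F g in auto)
    thus "(\<Sum>l<nc. f g * (fps_const (\<rho> g $$ (i,l)) * fps_const (Q $$ (l,j)))) = f g * fps_const ((\<rho> g * Q) $$ (i,j))"
      by (simp add: fpsc.hom_sum sum_distrib_left fps_const_mult)
  qed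
  also have "\<dots> = gsum G f (\<lambda>g. \<rho> g * Q) nr n2 $$ (i,j)" using i j by (simp add: gsum_index)
  finally show "(gsum G f \<rho> nr nc * map_mat fps_const Q) $$ (i,j) = gsum G f (\<lambda>g. \<rho> g * Q) nr n2 $$ (i,j)" .
qed (use Q in \<open>auto simp: gsum_def\<close>)

lemma gsum_four_block:
  assumes A: "\<forall>g\<in>carrier G. A g \<in> carrier_mat k k" and X: "\<forall>g\<in>carrier G. X g \<in> carrier_mat k m"
    and D: "\<forall>g\<in>carrier G. D g \<in> carrier_mat m m"
  shows "gsum G f (\<lambda>g. four_block_mat (A g) (X g) (0\<^sub>m m k) (D g)) (k+m) (k+m) =
    four_block_mat (gsum G f A k k) (gsum G f X k m) (0\<^sub>m m k) (gsum G f D m m)"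
proof (rule eq_matI)
  fix i j assume "i < dim_row (four_block_mat (gsum G f A k k) (gsum G f X k m) (0\<^sub>m m k) (gsum G f D m m))"
    "j < dim_col (four_block_mat (gsum G f A k k) (gsum G f X k m) (0\<^sub>m m k) (gsum G f D m m))"
  hence i: "i < k + m" and j: "j < k + m" by (auto simp: gsum_def)
  have e: "four_block_mat (A g) (X g) (0\<^sub>m m k) (D g) $$ (i,j) =
     (if i < k then if j < k then A g $$ (i,j) else X g $$ (i, j - k)
      else if j < k then 0 else D g $$ (i - k, j - k))" if g: "g \<in> carrier G" for g
  proof -
    have "dim_row (A g) = k" "dim_col (A g) = k" "dim_row (D g) = m" "dim_col (D g) = m"
      using A D g by auto
    thus ?thesis using i j by simp
  qed
  show "gsum G f (\<lambda>g. four_block_mat (A g) (X g) (0\<^sub>m m k) (D g)) (k+m) (k+m) $$ (i,j) =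
    four_block_mat (gsum G f A k k) (gsum G f X k m) (0\<^sub>m m k) (gsum G f D m m) $$ (i,j)"
  proof -
    have "gsum G f (\<lambda>g. four_block_mat (A g) (X g) (0\<^sub>m m k) (D g)) (k+m) (k+m) $$ (i,j) =
      (\<Sum>g\<in>carrier G. f g * fps_const (if i < k then if j < k then A g $$ (i,j) else X g $$ (i, j - k)
      else if j < k then 0 else D g $$ (i - k, j - k)))"
      unfolding gsum_index[OF i j] by (rule sum.cong[OF refl]) (simp add: e)
    also have "\<dots> = four_block_mat (gsum G f A k k) (gsum G f X k m) (0\<^sub>m m k) (gsum G f D m m) $$ (i,j)"
      using i j by (cases "i < k"; cases "j < k") (auto simp: gsum_index)
    finally show ?thesis .
  qed
qed (auto simp: gsum_def)

lemma det_conj_fps: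
  fixes U V :: "complex mat" and S :: "complex fps mat"
  assumes U: "U \<in> carrier_mat d d" and V: "V \<in> carrier_mat d d" and VU: "V * U = 1\<^sub>m d"
    and S: "S \<in> carrier_mat d d"
  shows "det (map_mat fps_const V * S * map_mat fps_const U) = det S"
proof -
  have U': "map_mat fps_const U \<in> carrier_mat d d" and V': "map_mat fps_const V \<in> carrier_mat d d" using U V by auto
  have "det (map_mat fps_const V * S * map_mat fps_const U) = det (map_mat fps_const V) * det S * det (map_mat fps_const U)"
    using det_mult[OF mult_carrier_mat[OF V' S] U'] det_mult[OF V' S] by simp
  also have "\<dots> = fps_const (det V) * det S * fps_const (det U)" using fpsc.hom_det[of V] fpsc.hom_det[of U] by metis
  also have "\<dots> = (fps_const (det V) * fps_const (det U)) * det S" by (metis mult.assoc mult.commute)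
  also have "fps_const (det V) * fps_const (det U) = 1"
  proof -
    have "det V * det U = 1" using det_mult[OF V U] VU by simp
    thus ?thesis by (metis fps_const_mult fps_const_1_eq_1)
  qed
  finally show ?thesis by simp
qed

lemma det_diag_fps:
  "det (mat d d (\<lambda>(i,j). if i = j then c else 0) :: complex fps mat) = c ^ d"
proof -
  have "det (mat d d (\<lambda>(i,j). if i = j then c else 0) :: complex fps mat) =
     prod_list (diag_mat (mat d d (\<lambda>(i,j). if i = j then c else 0) :: complex fps mat))"
    by (rule det_upper_triangular) (auto simp: upper_triangular_def)
  also have "diag_mat (mat d d (\<lambda>(i,j). if i = j then c else 0) :: complex fps mat) = replicate d c"
    by (intro nth_equalityI) (auto simp: diag_mat_def)
  also have "prod_list (replicate d c) = c ^ d" by (rule prod_list_replicate)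
  finally show ?thesis .
qed


(* ---- part 7 ---- *)

lemma fps_cancel:
  fixes x y :: "complex fps"
  assumes "of_nat n * x = of_nat n * y" and "n \<noteq> 0"
  shows "x = y"
proof -
  have "fps_const (1 / of_nat n) * (of_nat n * x) = fps_const (1 / of_nat n) * (of_nat n * y)"
    using assms(1) by simp
  moreover have "fps_const (1 / of_nat n) * (of_nat n * z) = z" for z :: "complex fps"
  proof -
    have "fps_const (1 / of_nat n) * (of_nat n * z) = (fps_const (1 / of_nat n) * fps_const (of_nat n)) * z"
      by (simp add: fps_of_nat mult.assoc)
    also have "fps_const (1 / of_nat n) * fps_const (of_nat n) = (1 :: complex fps)"
      using assms(2) by (simp add: fps_const_mult)
    finally show ?thesis by simp
  qed
  ultimately show ?thesis by simp
qed

context group begin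

lemma inv_cancel_left': "h \<in> carrier G \<Longrightarrow> a \<in> carrier G \<Longrightarrow> inv h \<otimes> (h \<otimes> a) = a"
  by (simp add: m_assoc[symmetric])

lemma inv_cancel_left'': "h \<in> carrier G \<Longrightarrow> a \<in> carrier G \<Longrightarrow> h \<otimes> (inv h \<otimes> a) = a"
  by (simp add: m_assoc[symmetric])

lemma conj_bij:
  assumes h: "h \<in> carrier G"
  shows "(\<Sum>g\<in>carrier G. F (h \<otimes> g \<otimes> inv h)) = (\<Sum>g\<in>carrier G. F g)"
  by (rule sum.reindex_bij_witness[of _ "\<lambda>g. inv h \<otimes> g \<otimes> h" "\<lambda>g. h \<otimes> g \<otimes> inv h"])
    (use h in \<open>auto simp: m_assoc inv_cancel_left' inv_cancel_left''\<close>)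

lemma char_one: "is_rep G d \<rho> \<Longrightarrow> character G \<rho> \<one> = of_nat d"
  unfolding character_def mat_trace_def using rep_one[of d \<rho>] by simp

lemma char_deg_rep: "is_rep G d \<rho> \<Longrightarrow> char_deg G (character G \<rho>) = d"
  unfolding char_deg_def using char_one[of d \<rho>] by simp

lemma conj_avg_scalar:
  assumes irr: "is_irr_rep G d \<rho>" and g: "g \<in> carrier G"
  shows "csum G d d (\<lambda>h. \<rho> (h \<otimes> g \<otimes> inv h)) =
    (of_nat (card (carrier G)) * character G \<rho> g / of_nat d) \<cdot>\<^sub>m 1\<^sub>m d"
proof -
  note r = irr_rep[OF irr]
  note c = rep_carrier[OF r]
  have d: "0 < d" using r unfolding is_rep_def by auto
  define A where "A = csum G d d (\<lambda>h. \<rho> (h \<otimes> g \<otimes> inv h))"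
  have Ac: "A \<in> carrier_mat d d" unfolding A_def by simp
  have cc: "\<forall>h\<in>carrier G. \<rho> (h \<otimes> g \<otimes> inv h) \<in> carrier_mat d d" using c g by auto
  have comm: "\<forall>k\<in>carrier G. A * \<rho> k = \<rho> k * A"
  proof
    fix k assume k: "k \<in> carrier G"
    define F where "F x = \<rho> (x \<otimes> g \<otimes> inv x \<otimes> k)" for x
    have "\<rho> k * A = csum G d d (\<lambda>h. \<rho> k * \<rho> (h \<otimes> g \<otimes> inv h))"
      unfolding A_def by (rule csum_left[OF c[OF k] cc])
    also have "\<dots> = csum G d d (\<lambda>h. F (k \<otimes> h))"
    proof (rule csum_cong)
      fix h assume h: "h \<in> carrier G"
      have "k \<otimes> h \<otimes> g \<otimes> inv (k \<otimes> h) \<otimes> k = k \<otimes> (h \<otimes> g \<otimes> inv h)"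
        using h k g by (simp add: m_assoc inv_mult_group)
      thus "\<rho> k * \<rho> (h \<otimes> g \<otimes> inv h) = F (k \<otimes> h)" unfolding F_def
        using rep_mult[OF r k, of "h \<otimes> g \<otimes> inv h"] h g k by simp
    qed
    also have "\<dots> = csum G d d F" by (rule csum_reindex[OF k])
    also have "\<dots> = csum G d d (\<lambda>h. \<rho> (h \<otimes> g \<otimes> inv h) * \<rho> k)"
      by (rule csum_cong) (use g k in \<open>simp add: F_def rep_mult[OF r]\<close>)
    also have "\<dots> = A * \<rho> k" unfolding A_def by (rule csum_right[OF c[OF k] cc, symmetric])
    finally show "A * \<rho> k = \<rho> k * A" by simp
  qed
  from schur1[OF irr Ac comm] obtain cst where Acst: "A = cst \<cdot>\<^sub>m 1\<^sub>m d" by auto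
  have "mat_trace A = (\<Sum>h\<in>carrier G. mat_trace (\<rho> (h \<otimes> g \<otimes> inv h)))"
    unfolding A_def by (rule csum_trace[OF cc])
  also have "\<dots> = (\<Sum>h\<in>carrier G. character G \<rho> g)"
  proof (rule sum.cong[OF refl])
    fix h assume h: "h \<in> carrier G"
    have "\<rho> (h \<otimes> g \<otimes> inv h) = \<rho> h * \<rho> g * \<rho> (inv h)" using h g by (simp add: rep_mult[OF r])
    moreover have "mat_trace (\<rho> h * \<rho> g * \<rho> (inv h)) = mat_trace (\<rho> g)"
      by (rule trace_conj[OF c[OF inv_closed[OF h]] c[OF h] rep_inv'[OF r h] c[OF g]])
    ultimately show "mat_trace (\<rho> (h \<otimes> g \<otimes> inv h)) = character G \<rho> g"
      unfolding character_def using g by simp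
  qed
  also have "\<dots> = of_nat (card (carrier G)) * character G \<rho> g" by simp
  finally have "of_nat d * cst = of_nat (card (carrier G)) * character G \<rho> g"
    unfolding Acst trace_smult_one by simp
  hence "cst = of_nat (card (carrier G)) * character G \<rho> g / of_nat d" using d by (auto simp: field_simps)
  thus ?thesis using Acst unfolding A_def by simp
qed

lemma schur_classfun:
  assumes irr: "is_irr_rep G d \<rho>" and fin: "finite (carrier G)" and cf: "classfun G f"
  shows "gsum G f \<rho> d d = mat d d (\<lambda>(i,j). if i = j then coef G f (character G \<rho>) else 0)"
proof (rule eq_matI)
  note r = irr_rep[OF irr]
  have d: "0 < d" using r unfolding is_rep_def by auto
  have n0: "card (carrier G) \<noteq> 0" using fin by auto
  fix i j assume "i < dim_row (mat d d (\<lambda>(i,j). if i = j then coef G f (character G \<rho>) else 0))"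
    "j < dim_col (mat d d (\<lambda>(i,j). if i = j then coef G f (character G \<rho>) else 0))"
  hence i: "i < d" and j: "j < d" by auto
  define S where "S = (\<Sum>g\<in>carrier G. f g * fps_const (\<rho> g $$ (i,j)))"
  have Sh: "S = (\<Sum>g\<in>carrier G. f g * fps_const (\<rho> (h \<otimes> g \<otimes> inv h) $$ (i,j)))" if h: "h \<in> carrier G" for h
  proof -
    have "S = (\<Sum>g\<in>carrier G. f (h \<otimes> g \<otimes> inv h) * fps_const (\<rho> (h \<otimes> g \<otimes> inv h) $$ (i,j)))"
      unfolding S_def by (rule conj_bij[OF h, symmetric])
    also have "\<dots> = (\<Sum>g\<in>carrier G. f g * fps_const (\<rho> (h \<otimes> g \<otimes> inv h) $$ (i,j)))"
      by (rule sum.cong[OF refl]) (use cf h in \<open>simp add: classfun_def\<close>)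
    finally show ?thesis .
  qed
  have "of_nat (card (carrier G)) * S = (\<Sum>h\<in>carrier G. S)" by simp
  also have "\<dots> = (\<Sum>h\<in>carrier G. \<Sum>g\<in>carrier G. f g * fps_const (\<rho> (h \<otimes> g \<otimes> inv h) $$ (i,j)))"
    by (rule sum.cong[OF refl]) (rule Sh)
  also have "\<dots> = (\<Sum>g\<in>carrier G. \<Sum>h\<in>carrier G. f g * fps_const (\<rho> (h \<otimes> g \<otimes> inv h) $$ (i,j)))"
    by (rule sum.swap)
  also have "\<dots> = (\<Sum>g\<in>carrier G. f g * fps_const (csum G d d (\<lambda>h. \<rho> (h \<otimes> g \<otimes> inv h)) $$ (i,j)))"
    using i j by (simp add: csum_index sum_distrib_left fpsc.hom_sum)
  also have "\<dots> = (\<Sum>g\<in>carrier G. f g * fps_const (if i = j then of_nat (card (carrier G)) * character G \<rho> g / of_nat d else 0))"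
    by (rule sum.cong[OF refl]) (use i j in \<open>simp add: conj_avg_scalar[OF irr]\<close>)
  also have "\<dots> = of_nat (card (carrier G)) * (if i = j then coef G f (character G \<rho>) else 0)"
  proof (cases "i = j")
    case True
    have "(\<Sum>g\<in>carrier G. f g * fps_const (of_nat (card (carrier G)) * character G \<rho> g / of_nat d)) =
      (\<Sum>g\<in>carrier G. fps_const (of_nat (card (carrier G))) * (f g * fps_const (character G \<rho> g) * fps_const (1 / of_nat d)))"
      by (rule sum.cong[OF refl]) (simp add: fps_const_mult[symmetric] ac_simps)
    also have "\<dots> = of_nat (card (carrier G)) * coef G f (character G \<rho>)"
      unfolding coef_def char_one[OF r] by (simp add: sum_distrib_left sum_distrib_right fps_of_nat)
    finally show ?thesis using True by simp
  qed simp
  finally have "of_nat (card (carrier G)) * S = of_nat (card (carrier G)) * (if i = j then coef G f (character G \<rho>) else 0)" .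
  from fps_cancel[OF this n0] show "gsum G f \<rho> d d $$ (i,j) = mat d d (\<lambda>(i,j). if i = j then coef G f (character G \<rho>) else 0) $$ (i,j)"
    using i j by (simp add: gsum_index S_def)
qed auto

end

(* ---- part 8 ---- *)

context group begin

lemma decomp:
  assumes fin: "finite (carrier G)"
  shows "is_rep G d \<rho> \<Longrightarrow> \<exists>L. set L \<subseteq> Irr G \<and>
    (\<forall>g\<in>carrier G. mat_trace (\<rho> g) = (\<Sum>\<chi>\<leftarrow>L. \<chi> g)) \<and>
    (\<forall>f. classfun G f \<longrightarrow> det (gsum G f \<rho> d d) = (\<Prod>\<chi>\<leftarrow>L. coef G f \<chi> ^ char_deg G \<chi>))"
proof (induct d arbitrary: \<rho> rule: less_induct)
  case (less d \<rho>)
  note rep = less(2)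
  show ?case
  proof (cases "is_irr_rep G d \<rho>")
    case True
    show ?thesis
    proof (intro exI[of _ "[character G \<rho>]"] conjI allI impI ballI)
      show "set [character G \<rho>] \<subseteq> Irr G" using True unfolding Irr_def by auto
      fix g assume "g \<in> carrier G"
      thus "mat_trace (\<rho> g) = (\<Sum>\<chi>\<leftarrow>[character G \<rho>]. \<chi> g)" unfolding character_def by simp
    next
      fix f assume cf: "classfun G f"
      show "det (gsum G f \<rho> d d) = (\<Prod>\<chi>\<leftarrow>[character G \<rho>]. coef G f \<chi> ^ char_deg G \<chi>)"
        unfolding schur_classfun[OF True fin cf] det_diag_fps by (simp add: char_deg_rep[OF rep])
    qed
  next
    case False
    from reducible_split[OF rep False] obtain k U V A X D where
      k: "0 < k" "k < d" and U: "U \<in> carrier_mat d d" and V: "V \<in> carrier_mat d d"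
      and UV: "U * V = 1\<^sub>m d" and VU: "V * U = 1\<^sub>m d" and repA: "is_rep G k A" and repD: "is_rep G (d-k) D"
      and blk: "\<forall>g\<in>carrier G. X g \<in> carrier_mat k (d-k) \<and>
        V * \<rho> g * U = four_block_mat (A g) (X g) (0\<^sub>m (d-k) k) (D g)"
      by blast
    from less(1)[OF k(2) repA] obtain L1 where L1: "set L1 \<subseteq> Irr G"
      "\<forall>g\<in>carrier G. mat_trace (A g) = (\<Sum>\<chi>\<leftarrow>L1. \<chi> g)"
      "\<forall>f. classfun G f \<longrightarrow> det (gsum G f A k k) = (\<Prod>\<chi>\<leftarrow>L1. coef G f \<chi> ^ char_deg G \<chi>)" by blast
    have dk: "d - k < d" using k by simp
    from less(1)[OF dk repD] obtain L2 where L2: "set L2 \<subseteq> Irr G"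
      "\<forall>g\<in>carrier G. mat_trace (D g) = (\<Sum>\<chi>\<leftarrow>L2. \<chi> g)"
      "\<forall>f. classfun G f \<longrightarrow> det (gsum G f D (d-k) (d-k)) = (\<Prod>\<chi>\<leftarrow>L2. coef G f \<chi> ^ char_deg G \<chi>)" by blast
    note cA = rep_carrier[OF repA] and cD = rep_carrier[OF repD] and cr = rep_carrier[OF rep]
    show ?thesis
    proof (intro exI[of _ "L1 @ L2"] conjI allI impI ballI)
      show "set (L1 @ L2) \<subseteq> Irr G" using L1 L2 by auto
      fix g assume g: "g \<in> carrier G"
      have "mat_trace (\<rho> g) = mat_trace (V * \<rho> g * U)" by (rule trace_conj[OF U V UV cr[OF g], symmetric])
      also have "\<dots> = mat_trace (A g) + mat_trace (D g)"
        using blk g trace_four_block[OF cA[OF g] cD[OF g]] by simp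
      finally show "mat_trace (\<rho> g) = (\<Sum>\<chi>\<leftarrow>L1 @ L2. \<chi> g)" using L1(2) L2(2) g by simp
    next
      fix f assume cf: "classfun G f"
      have "det (gsum G f \<rho> d d) = det (map_mat fps_const V * gsum G f \<rho> d d * map_mat fps_const U)"
        by (rule det_conj_fps[OF U V VU gsum_carrier, symmetric])
      also have "map_mat fps_const V * gsum G f \<rho> d d * map_mat fps_const U = gsum G f (\<lambda>g. V * \<rho> g * U) d d"
      proof -
        have "map_mat fps_const V * gsum G f \<rho> d d = gsum G f (\<lambda>g. V * \<rho> g) d d"
          by (rule gsum_left[OF V]) (use cr in auto)
        moreover have "gsum G f (\<lambda>g. V * \<rho> g) d d * map_mat fps_const U = gsum G f (\<lambda>g. V * \<rho> g * U) d d"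
          by (rule gsum_right[OF U]) (use cr V in auto)
        ultimately show ?thesis by simp
      qed
      also have "\<dots> = gsum G f (\<lambda>g. four_block_mat (A g) (X g) (0\<^sub>m (d-k) k) (D g)) (k + (d-k)) (k + (d-k))"
        using blk k by (auto intro!: gsum_cong)
      also have "\<dots> = four_block_mat (gsum G f A k k) (gsum G f X k (d-k)) (0\<^sub>m (d-k) k) (gsum G f D (d-k) (d-k))"
        by (rule gsum_four_block) (use cA cD blk in auto)
      also have "det \<dots> = det (gsum G f A k k) * det (gsum G f D (d-k) (d-k))"
        by (rule det_four_block_mat_lower_left_zero) auto
      also have "\<dots> = (\<Prod>\<chi>\<leftarrow>L1 @ L2. coef G f \<chi> ^ char_deg G \<chi>)" using L1(3) L2(3) cf by simp
      finally show "det (gsum G f \<rho> d d) = (\<Prod>\<chi>\<leftarrow>L1 @ L2. coef G f \<chi> ^ char_deg G \<chi>)" .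
    qed
  qed
qed

end

(* ---- part 9 ---- *)

lemma prod_list_count:
  fixes h :: "'x \<Rightarrow> 'b::comm_monoid_mult"
  shows "prod_list (map h L) = (\<Prod>x\<in>set L. h x ^ count_list L x)"
proof (induct L)
  case Nil
  then show ?case by simp
next
  case (Cons a L)
  show ?case
  proof (cases "a \<in> set L")
    case True
    have "(\<Prod>x\<in>set (a # L). h x ^ count_list (a # L) x) = (\<Prod>x\<in>set L. (if x = a then h a else 1) * h x ^ count_list L x)"
      using True by (intro prod.cong) auto
    also have "\<dots> = (\<Prod>x\<in>set L. if x = a then h a else 1) * (\<Prod>x\<in>set L. h x ^ count_list L x)"
      by (rule prod.distrib)
    also have "(\<Prod>x\<in>set L. if x = a then h a else 1) = h a" using True by (simp add: prod.delta)
    finally show ?thesis using Cons by simp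
  next
    case False
    have "(\<Prod>x\<in>set (a # L). h x ^ count_list (a # L) x) = h a * (\<Prod>x\<in>set L. h x ^ count_list (a # L) x)"
      using False by simp
    also have "(\<Prod>x\<in>set L. h x ^ count_list (a # L) x) = (\<Prod>x\<in>set L. h x ^ count_list L x)"
      using False by (intro prod.cong) auto
    finally show ?thesis using Cons False by simp
  qed
qed

lemma sum_list_if_count:
  "(\<Sum>\<chi>\<leftarrow>L. if \<chi> = \<psi> then c else 0) = of_nat (count_list L \<psi>) * (c :: 'b::comm_semiring_1)"
  by (induct L) (auto simp: algebra_simps)

lemma sum_sum_list_swap:
  "(\<Sum>g\<in>A. \<Sum>\<chi>\<leftarrow>L. h \<chi> g) = (\<Sum>\<chi>\<leftarrow>L. \<Sum>g\<in>A. h \<chi> g)"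
  by (induct L) (auto simp: sum.distrib)

context group begin

lemma main_aux:
  fixes S :: "'a set" and n :: nat and e :: "nat \<Rightarrow> 'a" and \<beta> :: "'a \<Rightarrow> int"
  assumes fin: "finite (carrier G)"
    and enum: "bij_betw e {..<n} (carrier G)"
    and S_sub: "S \<subseteq> carrier G"
    and S_conj: "\<forall>g\<in>carrier G. (\<lambda>s. g \<otimes> s \<otimes> inv g) ` S = S"
    and S_one: "\<one> \<notin> S"
    and beta_conj: "\<forall>g\<in>carrier G. \<forall>a\<in>S. \<beta> (g \<otimes> a \<otimes> inv g) = \<beta> a"
  shows "iwasawa_fps G S \<beta> n e = (\<Prod>\<chi>\<in>Irr G. P_chi G S \<beta> \<chi> ^ (char_deg G \<chi> ^ 2))"
proof -
  have card_n: "card (carrier G) = n" using bij_betw_same_card[OF enum] by simp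
  have "carrier G \<noteq> {}" using one_closed by blast
  hence n0: "n \<noteq> 0" using card_n fin by auto
  have inj: "inj_on e {..<n}" and img: "e ` {..<n} = carrier G" using enum by (auto simp: bij_betw_def)
  have ec: "i < n \<Longrightarrow> e i \<in> carrier G" for i using img by auto
  have einj: "i < n \<Longrightarrow> j < n \<Longrightarrow> e i = e j \<longleftrightarrow> i = j" for i j using inj by (auto simp: inj_on_def)
  have esurj: "x \<in> carrier G \<Longrightarrow> \<exists>l<n. e l = x" for x using img by force
  define lr where "lr g = mat n n (\<lambda>(i,j). if e i = g \<otimes> e j then 1 else (0::complex))" for g
  have lam_rep: "is_rep G n lr"
    unfolding is_rep_def
  proof (intro conjI ballI)
    show "0 < n" using n0 by simp
    fix g assume "g \<in> carrier G" thus "lr g \<in> carrier_mat n n" unfolding lr_def by simp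
  next
    show "lr \<one> = 1\<^sub>m n" unfolding lr_def by (rule eq_matI) (auto simp: ec einj)
  next
    fix g h assume g: "g \<in> carrier G" and h: "h \<in> carrier G"
    show "lr (g \<otimes> h) = lr g * lr h"
    proof (rule eq_matI)
      fix i j assume "i < dim_row (lr g * lr h)" "j < dim_col (lr g * lr h)"
      hence i: "i < n" and j: "j < n" unfolding lr_def by auto
      obtain l0 where l0: "l0 < n" "e l0 = h \<otimes> e j" using esurj[of "h \<otimes> e j"] h ec[OF j] by auto
      have "(lr g * lr h) $$ (i,j) = (\<Sum>l<n. lr g $$ (i,l) * lr h $$ (l,j))"
        by (rule mult_index) (use i j in \<open>auto simp: lr_def\<close>)
      also have "\<dots> = (\<Sum>l<n. if l = l0 then (if e i = g \<otimes> e l0 then 1 else 0) else 0)"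
      proof (rule sum.cong[OF refl])
        fix l assume "l \<in> {..<n}" hence l: "l < n" by simp
        have "e l = h \<otimes> e j \<longleftrightarrow> l = l0" using l0 einj[OF l l0(1)] by simp
        thus "lr g $$ (i,l) * lr h $$ (l,j) = (if l = l0 then (if e i = g \<otimes> e l0 then 1 else 0) else 0)"
          using i j l unfolding lr_def by auto
      qed
      also have "\<dots> = (if e i = g \<otimes> e l0 then 1 else 0)" using l0 by simp
      also have "\<dots> = lr (g \<otimes> h) $$ (i,j)" using i j l0 g h ec[OF j] unfolding lr_def by (simp add: m_assoc)
      finally show "lr (g \<otimes> h) $$ (i,j) = (lr g * lr h) $$ (i,j)" by simp
    qed (auto simp: lr_def)
  qed
  have lam_trace: "mat_trace (lr g) = (if g = \<one> then of_nat n else 0)" if g: "g \<in> carrier G" for g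
  proof -
    have "e i = g \<otimes> e i \<longleftrightarrow> g = \<one>" if i: "i < n" for i
      using ec[OF i] g by simp
    hence "mat_trace (lr g) = (\<Sum>i<n. if g = \<one> then 1 else 0)" unfolding mat_trace_def lr_def by simp
    thus ?thesis by simp
  qed
  define F where "F g = (if g = \<one> then of_nat (card S) else 0) - (if g \<in> S then one_plus_T_pow (\<beta> g) else 0)" for g
  have cf: "classfun G F" unfolding classfun_def
  proof (intro ballI)
    fix g h assume g: "g \<in> carrier G" and h: "h \<in> carrier G"
    have one: "h \<otimes> g \<otimes> inv h = \<one> \<longleftrightarrow> g = \<one>"
    proof
      assume "h \<otimes> g \<otimes> inv h = \<one>"
      hence "inv h \<otimes> (h \<otimes> g \<otimes> inv h) \<otimes> h = inv h \<otimes> \<one> \<otimes> h" by simp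
      thus "g = \<one>" using g h by (simp add: m_assoc inv_cancel_left' inv_cancel_left'')
    qed (use h in simp)
    have inS: "h \<otimes> g \<otimes> inv h \<in> S \<longleftrightarrow> g \<in> S"
    proof
      assume a: "h \<otimes> g \<otimes> inv h \<in> S"
      have "inv h \<otimes> (h \<otimes> g \<otimes> inv h) \<otimes> inv (inv h) \<in> S"
        using S_conj inv_closed[OF h] a by blast
      thus "g \<in> S" using g h by (simp add: m_assoc inv_cancel_left' inv_cancel_left'')
    next
      assume "g \<in> S" thus "h \<otimes> g \<otimes> inv h \<in> S" using S_conj h by blast
    qed
    show "F (h \<otimes> g \<otimes> inv h) = F g"
      unfolding F_def one inS using beta_conj h by auto
  qed
  from decomp[OF fin lam_rep] obtain L where L: "set L \<subseteq> Irr G"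
    and Ltr: "\<forall>g\<in>carrier G. mat_trace (lr g) = (\<Sum>\<chi>\<leftarrow>L. \<chi> g)"
    and Ldet: "\<forall>f. classfun G f \<longrightarrow> det (gsum G f lr n n) = (\<Prod>\<chi>\<leftarrow>L. coef G f \<chi> ^ char_deg G \<chi>)"
    by blast
  have M: "gsum G F lr n n = mat n n (\<lambda>(i,j).
      (if i = j then of_nat (card S) else 0) -
      (if e i \<otimes> inv e j \<in> S then one_plus_T_pow (\<beta> (e i \<otimes> inv e j)) else 0))"
  proof (rule eq_matI)
    fix i j assume "i < dim_row (mat n n (\<lambda>(i,j).
      (if i = j then of_nat (card S) else 0) -
      (if e i \<otimes> inv e j \<in> S then one_plus_T_pow (\<beta> (e i \<otimes> inv e j)) else (0 :: complex fps))))"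
      "j < dim_col (mat n n (\<lambda>(i,j).
      (if i = j then of_nat (card S) else 0) -
      (if e i \<otimes> inv e j \<in> S then one_plus_T_pow (\<beta> (e i \<otimes> inv e j)) else (0 :: complex fps))))"
    hence i: "i < n" and j: "j < n" by auto
    define x where "x = e i \<otimes> inv e j"
    have xc: "x \<in> carrier G" unfolding x_def using ec i j by simp
    have eq: "e i = g \<otimes> e j \<longleftrightarrow> g = x" if g: "g \<in> carrier G" for g
    proof
      assume "e i = g \<otimes> e j"
      thus "g = x" unfolding x_def using g ec[OF j] by (simp add: m_assoc)
    next
      assume "g = x"
      thus "e i = g \<otimes> e j" unfolding x_def using ec[OF i] ec[OF j] by (simp add: m_assoc)
    qed
    have x1: "x = \<one> \<longleftrightarrow> i = j"
    proof
      assume "x = \<one>"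
      hence "e i = \<one> \<otimes> e j" using eq[OF one_closed] by simp
      thus "i = j" using einj[OF i j] ec[OF j] by simp
    next
      assume "i = j" thus "x = \<one>" unfolding x_def using ec[OF i] by simp
    qed
    have "gsum G F lr n n $$ (i,j) = (\<Sum>g\<in>carrier G. F g * fps_const (lr g $$ (i,j)))"
      by (rule gsum_index[OF i j])
    also have "\<dots> = (\<Sum>g\<in>carrier G. if g = x then F x else 0)"
      by (rule sum.cong[OF refl]) (use i j eq in \<open>auto simp: lr_def\<close>)
    also have "\<dots> = F x" using xc fin by simp
    finally show "gsum G F lr n n $$ (i,j) = mat n n (\<lambda>(i,j).
      (if i = j then of_nat (card S) else 0) -
      (if e i \<otimes> inv e j \<in> S then one_plus_T_pow (\<beta> (e i \<otimes> inv e j)) else 0)) $$ (i,j)"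
      using i j x1 unfolding F_def x_def by simp
  qed auto
  have coefP: "coef G F \<chi> = P_chi G S \<beta> \<chi>" for \<chi>
  proof -
    have "(\<Sum>g\<in>carrier G. F g * fps_const (\<chi> g)) =
      (\<Sum>g\<in>carrier G. (if g = \<one> then of_nat (card S) * fps_const (\<chi> g) else 0) -
        (if g \<in> S then one_plus_T_pow (\<beta> g) * fps_const (\<chi> g) else 0))"
      by (rule sum.cong[OF refl]) (simp add: F_def left_diff_distrib)
    also have "\<dots> = (\<Sum>g\<in>carrier G. if g = \<one> then of_nat (card S) * fps_const (\<chi> g) else 0) -
      (\<Sum>g\<in>carrier G. if g \<in> S then one_plus_T_pow (\<beta> g) * fps_const (\<chi> g) else 0)"
      by (rule sum_subtractf)
    also have "(\<Sum>g\<in>carrier G. if g = \<one> then of_nat (card S) * fps_const (\<chi> g) else 0) = of_nat (card S) * fps_const (\<chi> \<one>)"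
      using fin by simp
    also have "(\<Sum>g\<in>carrier G. if g \<in> S then one_plus_T_pow (\<beta> g) * fps_const (\<chi> g) else 0) =
        (\<Sum>t\<in>S. fps_const (\<chi> t) * one_plus_T_pow (\<beta> t))"
    proof -
      have "(\<Sum>g\<in>carrier G. if g \<in> S then one_plus_T_pow (\<beta> g) * fps_const (\<chi> g) else 0) =
        (\<Sum>g\<in>carrier G \<inter> S. one_plus_T_pow (\<beta> g) * fps_const (\<chi> g))"
        using sum.inter_restrict[OF fin, of "\<lambda>g. one_plus_T_pow (\<beta> g) * fps_const (\<chi> g)" S] by simp
      also have "carrier G \<inter> S = S" using S_sub by auto
      finally show ?thesis by (simp add: mult.commute)
    qed
    finally show ?thesis unfolding coef_def P_chi_def Q_chi_def
      by (simp add: fps_const_mult[symmetric] fps_of_nat mult.commute)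
  qed
  have cnt: "count_list L \<psi> = char_deg G \<psi>" if psi: "\<psi> \<in> Irr G" for \<psi>
  proof -
    have "(\<Sum>g\<in>carrier G. mat_trace (lr g) * \<psi> (inv g)) = (\<Sum>g\<in>carrier G. if g = \<one> then of_nat n * \<psi> (inv g) else 0)"
      by (rule sum.cong[OF refl]) (simp add: lam_trace)
    also have "\<dots> = of_nat n * \<psi> \<one>" using fin by simp
    finally have a: "(\<Sum>g\<in>carrier G. mat_trace (lr g) * \<psi> (inv g)) = of_nat n * \<psi> \<one>" .
    have "(\<Sum>g\<in>carrier G. mat_trace (lr g) * \<psi> (inv g)) = (\<Sum>g\<in>carrier G. \<Sum>\<chi>\<leftarrow>L. \<chi> g * \<psi> (inv g))"
      by (rule sum.cong[OF refl]) (simp add: Ltr sum_list_mult_const)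
    also have "\<dots> = (\<Sum>\<chi>\<leftarrow>L. \<Sum>g\<in>carrier G. \<chi> g * \<psi> (inv g))" by (rule sum_sum_list_swap)
    also have "\<dots> = (\<Sum>\<chi>\<leftarrow>L. if \<chi> = \<psi> then of_nat n else 0)"
    proof -
      have mapeq: "map (\<lambda>\<chi>. \<Sum>g\<in>carrier G. \<chi> g * \<psi> (inv g)) L = map (\<lambda>\<chi>. if \<chi> = \<psi> then of_nat n else 0) L"
        using L orth[OF _ psi] card_n by (intro map_cong refl) auto
      show ?thesis by (metis mapeq)
    qed
    also have "\<dots> = of_nat (count_list L \<psi>) * of_nat n" by (rule sum_list_if_count)
    finally have "of_nat n * \<psi> \<one> = of_nat n * (of_nat (count_list L \<psi>) :: complex)" using a by (simp add: mult.commute)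
    hence "\<psi> \<one> = of_nat (count_list L \<psi>)" using n0 by simp
    thus ?thesis unfolding char_deg_def by simp
  qed
  have setL: "set L = Irr G"
  proof
    show "Irr G \<subseteq> set L"
    proof
      fix \<psi> assume psi: "\<psi> \<in> Irr G"
      then obtain d \<rho> where irr: "is_irr_rep G d \<rho>" and psr: "\<psi> = character G \<rho>" unfolding Irr_def by auto
      have "char_deg G \<psi> = d" using char_deg_rep[OF irr_rep[OF irr]] psr by simp
      moreover have "0 < d" using irr unfolding is_irr_rep_def is_rep_def by auto
      ultimately have "count_list L \<psi> \<noteq> 0" using cnt[OF psi] by simp
      thus "\<psi> \<in> set L" using count_list_0_iff by metis
    qed
  qed (rule L)
  have "iwasawa_fps G S \<beta> n e = det (gsum G F lr n n)" unfolding iwasawa_fps_def M ..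
  also have "\<dots> = (\<Prod>\<chi>\<leftarrow>L. coef G F \<chi> ^ char_deg G \<chi>)" using Ldet cf by simp
  also have "\<dots> = (\<Prod>\<chi>\<in>set L. (coef G F \<chi> ^ char_deg G \<chi>) ^ count_list L \<chi>)" by (rule prod_list_count)
  also have "\<dots> = (\<Prod>\<chi>\<in>Irr G. P_chi G S \<beta> \<chi> ^ (char_deg G \<chi> ^ 2))"
    unfolding setL by (rule prod.cong[OF refl]) (simp add: cnt coefP power_mult[symmetric] power2_eq_square)
  finally show ?thesis .
qed

end

theorem theorem3p2:
  fixes G :: "('a, 'm) monoid_scheme" and S :: "'a set" and n :: nat
    and e :: "nat \<Rightarrow> 'a" and l :: nat and \<beta> :: "'a \<Rightarrow> int"
  assumes grp: "group G" and fin: "finite (carrier G)"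
    and enum: "bij_betw e {..<n} (carrier G)"
    and S_sub: "S \<subseteq> carrier G"
    and S_conj: "\<forall>g\<in>carrier G. (\<lambda>s. g \<otimes>\<^bsub>G\<^esub> s \<otimes>\<^bsub>G\<^esub> inv\<^bsub>G\<^esub> g) ` S = S"
    and S_gen: "generate G S = carrier G"
    and S_inv: "(\<lambda>s. inv\<^bsub>G\<^esub> s) ` S = S"
    and S_one: "\<one>\<^bsub>G\<^esub> \<notin> S"
    and not_cycle: "cayley_euler_char G S \<noteq> 0"
    and prime_l: "prime l"
    and beta_conj: "\<forall>g\<in>carrier G. \<forall>a\<in>S. \<beta> (g \<otimes>\<^bsub>G\<^esub> a \<otimes>\<^bsub>G\<^esub> inv\<^bsub>G\<^esub> g) = \<beta> a"
    and beta_gen: "\<exists>s\<in>S. \<not> int l dvd \<beta> s"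
    and beta_inv: "\<forall>s\<in>S. \<beta> (inv\<^bsub>G\<^esub> s) = - \<beta> s"
    and beta_nonadd: "\<exists>hs :: 'a list. length hs > 0 \<and> set hs \<subseteq> S \<and>
        foldr (\<lambda>x y. x \<otimes>\<^bsub>G\<^esub> y) hs \<one>\<^bsub>G\<^esub> \<in> S \<and>
        \<not> [\<beta> (foldr (\<lambda>x y. x \<otimes>\<^bsub>G\<^esub> y) hs \<one>\<^bsub>G\<^esub>) = sum_list (map \<beta> hs)] (mod int l)"
  shows "iwasawa_fps G S \<beta> n e = (\<Prod>\<chi>\<in>Irr G. P_chi G S \<beta> \<chi> ^ (char_deg G \<chi> ^ 2))"
  by (rule group.main_aux[OF grp fin enum S_sub S_conj S_one beta_conj])


end
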